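(* Let $n\mid(q+1)$, let $r\ge1$ and $\delta\ge3$ be integers with $\delta$ odd and $(r+\delta-1)\mid n$, and put $\nu=n/(r+\delta-1)$, $B=\{\alpha^{j}:-\tfrac{\delta-3}{2}\le j\le\tfrac{\delta-1}{2}\}$. Let $i\in\{0,1,\dots,\lfloor\frac{r-1}{2}\rfloor\}$. (1) If $r+\delta-1$ is odd, for $\ell\in\{0,1,\dots,\lfloor\frac{\nu-3}{2}\rfloor\}$ let $A=\{\alpha^{j}: -\frac{r+\delta}{2}-\ell(r+\delta-1)-i\le j\le \frac{r+\delta-2}{2}+\ell(r+\delta-1)+i\}\cup\{\alpha^{\frac{r+\delta-2}{2}+(\ell+e)(r+\delta-1)}: e=1,\dots,\nu-2\ell-2\}$. Then $C_{AB}$ is an optimal cyclic $(r,\delta)$-LRC over $\mathbb{F}_q$ with dimension $(\nu-2\ell-1)r-2i$ and minimum distance $\delta+2i+(2\ell+1)(r+\delta-1)$. (2) If $r+\delta-1$ and $\nu$ are both odd, for $\ell\in\{1,2,\dots,\frac{\nu-3}{2}\}$ let $A=\{\alpha^{j}: \frac{n-1}{2}-\ell(r+\delta-1)-i\le j\le \frac{n-1}{2}+\ell(r+\delta-1)+i\}\cup\{\alpha^{\frac{n-1}{2}+(\ell+e)(r+\delta-1)}: e=1,\dots,\nu-2\ell-1\}$. Then $C_{AB}$ is an optimal cyclic $(r,\delta)$-LRC over $\mathbb{F}_q$ with dimension $(\nu-2\ell)r-2i$ and minimum distance $\delta+2i+2\ell(r+\delta-1)$.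
   Context: Let $q$ be a prime power and $n\mid(q+1)$, so the set $R_n$ of all $n$-th roots of unity lies in $\mathbb{F}_{q^2}$; let $\alpha\in\mathbb{F}_{q^2}$ be a primitive $n$-th root of unity; exponents of $\alpha$ are read modulo $n$. For $A,B\subseteq R_n$, $AB=\{\beta\gamma:\beta\in A,\gamma\in B\}$. For $Z\subseteq R_n$ such that $\{j:\alpha^j\in Z\}$ is closed under $j\mapsto -j\bmod n$ (equivalently a union of $q$-cyclotomic cosets modulo $n$), $C_Z$ denotes the cyclic code of length $n$ over $\mathbb{F}_q$ generated by $\prod_{\beta\in Z}(x-\beta)\in\mathbb{F}_q[x]$ in $\mathbb{F}_q[x]/(x^n-1)$ (dimension $n-|Z|$). Locality: for a linear code $C\subseteq\mathbb{F}_q^n$ and integers $r\ge1$, $\delta\ge2$, the $i$-th coordinate has $(r,\delta)$-locality if there is $S_i\subseteq\{1,\dots,n\}$ with $i\in S_i$, $|S_i|\le r+\delta-1$ such that the punctured code $C|_{S_i}$ has minimum distance at least $\delta$; $C$ is an $(r,\delta)$-LRC if every coordinate has $(r,\delta)$-locality. An $[n,k,d]$ $(r,\delta)$-LRC is optimal if $d=n-k-(\lceil k/r\rceil-1)(\delta-1)+1$ (always an upper bound on $d$). *)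

theory Defs
  imports "HOL-Computational_Algebra.Polynomial"
begin

definition rpow :: "'a::field \<Rightarrow> nat \<Rightarrow> int \<Rightarrow> 'a" where
  "rpow \<alpha> n j = \<alpha> ^ nat (j mod int n)"

definition setmul :: "'a::field set \<Rightarrow> 'a set \<Rightarrow> 'a set" where
  "setmul A B = {b * c | b c. b \<in> A \<and> c \<in> B}"

text \<open>The subfield F_q of a field of size q^2.\<close>
definition Fsub :: "nat \<Rightarrow> 'a::field set" where
  "Fsub q = {x. x ^ q = x}"

definition gen_poly :: "'a::field set \<Rightarrow> 'a poly" where
  "gen_poly Z = (\<Prod>\<beta>\<in>Z. [:-\<beta>, 1:])"

text \<open>Words of length n over F_q are functions nat => 'a, zero outside {..<n}.
  C_Z = residues in F_q[x]/(x^n-1) of multiples of the generator polynomial;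
  since the generator divides x^n-1, these are the words whose polynomial
  of degree < n is divisible by the generator.\<close>
definition cyc_code :: "nat \<Rightarrow> nat \<Rightarrow> 'a::field set \<Rightarrow> (nat \<Rightarrow> 'a) set" where
  "cyc_code q n Z = {c. (\<forall>i<n. c i \<in> Fsub q) \<and> (\<forall>i\<ge>n. c i = 0) \<and>
       gen_poly Z dvd (\<Sum>i<n. monom (c i) i)}"

definition hdist :: "nat set \<Rightarrow> (nat \<Rightarrow> 'a) \<Rightarrow> (nat \<Rightarrow> 'a) \<Rightarrow> nat" where
  "hdist S c c' = card {i\<in>S. c i \<noteq> c' i}"

definition min_dist :: "nat \<Rightarrow> (nat \<Rightarrow> 'a) set \<Rightarrow> nat" where
  "min_dist n C = Min {hdist {..<n} c c' | c c'. c \<in> C \<and> c' \<in> C \<and> c \<noteq> c'}"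

text \<open>Coordinate i has (r,delta)-locality: the punctured code C|_S has
  minimum distance at least delta (any two codewords differing on S differ
  in at least delta positions of S).\<close>
definition has_locality :: "nat \<Rightarrow> nat \<Rightarrow> nat \<Rightarrow> (nat \<Rightarrow> 'a) set \<Rightarrow> nat \<Rightarrow> bool" where
  "has_locality n r \<delta> C i = (\<exists>S. i \<in> S \<and> S \<subseteq> {..<n} \<and> card S \<le> r + \<delta> - 1 \<and>
     (\<forall>c\<in>C. \<forall>c'\<in>C. (\<exists>j\<in>S. c j \<noteq> c' j) \<longrightarrow> hdist S c c' \<ge> \<delta>))"

definition is_LRC :: "nat \<Rightarrow> nat \<Rightarrow> nat \<Rightarrow> (nat \<Rightarrow> 'a) set \<Rightarrow> bool" where
  "is_LRC n r \<delta> C = (\<forall>i<n. has_locality n r \<delta> C i)"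

text \<open>C is an optimal [n,k,d] (r,delta)-LRC over F_q (dimension k over F_q,
  i.e. card C = q^k).\<close>
definition optimal_LRC_with :: "nat \<Rightarrow> nat \<Rightarrow> nat \<Rightarrow> nat \<Rightarrow> (nat \<Rightarrow> 'a) set \<Rightarrow> nat \<Rightarrow> nat \<Rightarrow> bool" where
  "optimal_LRC_with q n r \<delta> C k d = (is_LRC n r \<delta> C \<and> card C = q ^ k \<and> min_dist n C = d \<and>
     int d = int n - int k - (\<lceil>real k / real r\<rceil> - 1) * (int \<delta> - 1) + 1)"

end

theory Submission
  imports Defs "HOL-Number_Theory.Residues"
begin


hide_const (open) UnivPoly.up_ring.coeff UnivPoly.up_ring.monom

lemma pow_card_same:
  fixes x :: "'a::{field,finite}"
  shows "x ^ card (UNIV :: 'a set) = x"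
proof (cases "x = 0")
  case False
  have "x * (\<Prod>y\<in>UNIV-{0}. x * y) = x * x ^ (card (UNIV :: 'a set) - 1) * \<Prod>(UNIV-{0})"
    by (simp add: prod.distrib mult_ac)
  also have "x * x ^ (card (UNIV :: 'a set) - 1) = x ^ Suc (card (UNIV :: 'a set) - 1)"
    by (subst power_Suc) auto
  also have "Suc (card (UNIV :: 'a set) - 1) = card (UNIV :: 'a set)"
    using finite_UNIV_card_ge_0[where ?'a = 'a] by simp
  also have "(\<Prod>y\<in>UNIV-{0}. x * y) = (\<Prod>y\<in>UNIV-{0}. y)"
    by (rule prod.reindex_bij_witness[of _ "\<lambda>y. y / x" "\<lambda>y. x * y"]) (use False in auto)
  finally show ?thesis
    by simp
qed (use finite_UNIV_card_ge_0[where ?'a = 'a] in auto)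

locale fq =
  fixes q :: nat and ty :: "'a::{field,finite} itself"
  assumes qpp: "\<exists>p m. prime p \<and> m > 0 \<and> q = p ^ m"
    and cardq: "card (UNIV :: 'a set) = q ^ 2"
begin

lemma char_q: "\<exists>m. q = CHAR('a) ^ m \<and> m > 0"
proof -
  obtain p m where pm: "prime p" "m > 0" "q = p ^ m" using qpp by blast
  have fin: "finite (UNIV :: 'a set)" by simp
  have pc: "prime CHAR('a)"
    using prime_CHAR_semidom[where ?'a = 'a] finite_imp_CHAR_pos[OF fin] by blast
  have "CHAR('a) dvd p ^ (m * 2)" using CHAR_dvd_CARD[where ?'a='a] cardq pm
    by (simp add: power_mult)
  hence "CHAR('a) dvd p" using pc prime_dvd_power by metis
  hence "CHAR('a) = p" using pc pm(1) by (simp add: primes_dvd_imp_eq)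
  thus ?thesis using pm by auto
qed

lemma prime_char: "prime CHAR('a)"
proof -
  have fin: "finite (UNIV :: 'a set)" by simp
  show ?thesis
    using prime_CHAR_semidom[where ?'a = 'a] finite_imp_CHAR_pos[OF fin] by blast
qed

lemma q_ge2: "q \<ge> 2"
proof -
  obtain p m where pm: "prime p" "m > 0" "q = p ^ m" using qpp by blast
  have "p \<ge> 2" using pm prime_ge_2_nat by blast
  hence "p ^ m \<ge> p ^ 1" using pm by (intro power_increasing) auto
  thus ?thesis using pm \<open>p\<ge>2\<close> by simp
qed

lemma q_pos[simp]: "q > 0" using q_ge2 by simp

lemma frob_add: "(x + y :: 'a) ^ q = x ^ q + y ^ q"
  using char_q prime_char freshmans_dream' by blast

lemma frob_sum: "(sum f A :: 'a) ^ q = sum (\<lambda>i. f i ^ q) A"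
  using char_q prime_char freshmans_dream_sum' by blast

lemma frob_neg: "(- x :: 'a) ^ q = - (x ^ q)"
proof -
  have "0 = (x + - x) ^ q" using q_ge2 by simp
  also have "\<dots> = x ^ q + (-x) ^ q" by (rule frob_add)
  finally show ?thesis by (simp add: eq_neg_iff_add_eq_0 add.commute)
qed

lemma frob_diff: "(x - y :: 'a) ^ q = x ^ q - y ^ q"
  using frob_add[of x "-y"] frob_neg[of y] by simp

lemma frob_frob: "((x::'a) ^ q) ^ q = x"
  using pow_card_same[of x] cardq by (simp add: power_mult[symmetric] power2_eq_square)

lemma frob_inj: "inj (\<lambda>x::'a. x ^ q)"
  by (metis frob_frob injI)

lemma Fsub_0: "0 \<in> (Fsub q :: 'a set)" using q_ge2 by (simp add: Fsub_def)
lemma Fsub_1: "1 \<in> (Fsub q :: 'a set)" by (simp add: Fsub_def)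
lemma Fsub_add: "x \<in> Fsub q \<Longrightarrow> y \<in> Fsub q \<Longrightarrow> (x + y :: 'a) \<in> Fsub q"
  by (simp add: Fsub_def frob_add)
lemma Fsub_diff: "x \<in> Fsub q \<Longrightarrow> y \<in> Fsub q \<Longrightarrow> (x - y :: 'a) \<in> Fsub q"
  by (simp add: Fsub_def frob_diff)
lemma Fsub_mult: "x \<in> Fsub q \<Longrightarrow> y \<in> Fsub q \<Longrightarrow> (x * y :: 'a) \<in> Fsub q"
  by (simp add: Fsub_def power_mult_distrib)
lemma Fsub_sum: "(\<And>i. i \<in> A \<Longrightarrow> f i \<in> Fsub q) \<Longrightarrow> (sum f A :: 'a) \<in> Fsub q"
  by (induction A rule: infinite_finite_induct) (auto simp: Fsub_0 Fsub_add)

lemma card_roots_le: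
  fixes c :: 'a
  shows "card {x::'a. x ^ q + c * x = 0} \<le> q"
proof -
  define P where "P = Polynomial.monom (1::'a) q + [:0, c:]"
  have dq: "degree (Polynomial.monom (1::'a) q) = q" by (simp add: degree_monom_eq)
  have dl: "degree [:0, c:] < q" using q_ge2 by (auto simp: degree_pCons_eq_if)
  have deg: "degree P = q" unfolding P_def using dq dl by (simp add: degree_add_eq_left)
  hence "P \<noteq> 0" using q_ge2 by auto
  moreover have "{x::'a. x ^ q + c * x = 0} = {x. poly P x = 0}"
    by (auto simp: P_def poly_monom mult.commute)
  ultimately show ?thesis using card_poly_roots_bound[of P] deg by simp
qed

lemma card_Fsub: "card (Fsub q :: 'a set) = q"
proof -
  define \<phi> where "\<phi> = (\<lambda>x::'a. x ^ q - x)"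
  have Fdef: "(Fsub q :: 'a set) = {x. x ^ q + (-1) * x = 0}" by (auto simp: Fsub_def)
  have le1: "card (Fsub q :: 'a set) \<le> q" unfolding Fdef by (rule card_roots_le)
  have im: "\<phi> ` UNIV \<subseteq> {y. y ^ q + 1 * y = 0}"
  proof
    fix y assume "y \<in> \<phi> ` UNIV"
    then obtain x where "y = x ^ q - x" by (auto simp: \<phi>_def)
    thus "y \<in> {y. y ^ q + 1 * y = 0}" by (simp add: frob_diff frob_frob)
  qed
  have le2: "card (\<phi> ` UNIV) \<le> q"
    using card_mono[OF _ im] card_roots_le[of 1] by simp
  have fib: "\<phi> -` {\<phi> x0} = (\<lambda>z. x0 + z) ` Fsub q" for x0
  proof (rule Set.set_eqI)
    fix x
    have "x \<in> \<phi> -` {\<phi> x0} \<longleftrightarrow> (x - x0) ^ q = x - x0"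
      by (auto simp: \<phi>_def frob_diff algebra_simps)
    also have "\<dots> \<longleftrightarrow> x \<in> (\<lambda>z. x0 + z) ` Fsub q"
      by (auto simp: Fsub_def image_iff intro: exI[of _ "x - x0"])
    finally show "x \<in> \<phi> -` {\<phi> x0} \<longleftrightarrow> x \<in> (\<lambda>z. x0 + z) ` Fsub q" .
  qed
  have cf: "card (\<phi> -` {y}) = card (Fsub q :: 'a set)" if yin: "y \<in> \<phi> ` UNIV" for y
  proof -
    obtain x0 where "y = \<phi> x0" using yin by auto
    thus ?thesis using fib[of x0] by (simp add: card_image inj_on_def)
  qed
  have "(UNIV :: 'a set) = (\<Union>y\<in>\<phi> ` UNIV. \<phi> -` {y})" by auto
  moreover have "card (\<Union>y\<in>\<phi> ` UNIV. \<phi> -` {y}) = (\<Sum>y\<in>\<phi> ` UNIV. card (\<phi> -` {y}))"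
    by (rule card_UN_disjoint) auto
  ultimately have "card (UNIV :: 'a set) = (\<Sum>y\<in>\<phi> ` UNIV. card (\<phi> -` {y}))"
    by simp
  also have "\<dots> = card (\<phi> ` UNIV) * card (Fsub q :: 'a set)" using cf by simp
  finally have "q * q = card (\<phi> ` UNIV) * card (Fsub q :: 'a set)"
    using cardq by (simp add: power2_eq_square)
  also have "\<dots> \<le> q * card (Fsub q :: 'a set)" using le2 by simp
  finally have "q \<le> card (Fsub q :: 'a set)" using q_ge2 by simp
  thus ?thesis using le1 by simp
qed

end


context fq begin

definition fr :: "'a poly \<Rightarrow> 'a poly" where "fr p = map_poly (\<lambda>x. x ^ q) p"

lemma coeff_fr: "coeff (fr p) i = (coeff p i) ^ q"
  unfolding fr_def using q_ge2 by (subst coeff_map_poly) auto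

lemma fr_mult: "fr (a * b) = fr a * fr b"
  by (rule poly_eqI) (simp add: coeff_fr coeff_mult frob_sum power_mult_distrib)

lemma fr_one: "fr 1 = 1"
  by (rule poly_eqI) (simp add: coeff_fr coeff_1 q_ge2)

lemma fr_lin: "fr [:- b, 1:] = [:- (b ^ q), 1:]"
  by (rule poly_eqI) (auto simp: coeff_fr coeff_pCons q_ge2 frob_neg split: nat.splits)

lemma fr_prod: "fr (prod f A) = (\<Prod>x\<in>A. fr (f x))"
  by (induction A rule: infinite_finite_induct) (auto simp: fr_one fr_mult)

lemma fr_diff: "fr (a - b) = fr a - fr b"
  by (rule poly_eqI) (simp add: coeff_fr frob_diff)

lemma fr_fix_iff: "fr p = p \<longleftrightarrow> (\<forall>i. coeff p i \<in> Fsub q)"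
  by (auto simp: poly_eq_iff coeff_fr Fsub_def)

lemma fr_gen: assumes "(\<lambda>x. x ^ q) ` Z = Z" shows "fr (gen_poly Z) = gen_poly Z"
proof -
  have "fr (gen_poly Z) = (\<Prod>\<beta>\<in>Z. [:- (\<beta> ^ q), 1:])"
    by (simp add: gen_poly_def fr_prod fr_lin)
  also have "\<dots> = (\<Prod>\<beta>\<in>(\<lambda>x. x ^ q) ` Z. [:- \<beta>, 1:])"
    using frob_inj by (subst prod.reindex) (auto simp: inj_on_def inj_def)
  also have "\<dots> = gen_poly Z" using assms by (simp add: gen_poly_def)
  finally show ?thesis .
qed

lemma gen_nz: "gen_poly (Z::'a set) \<noteq> 0"
  by (simp add: gen_poly_def)

lemma gen_deg: "degree (gen_poly (Z::'a set)) = card Z"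
  by (simp add: gen_poly_def degree_prod_eq_sum_degree)

lemma gen_root: "\<beta> \<in> Z \<Longrightarrow> poly (gen_poly (Z::'a set)) \<beta> = 0"
  by (simp add: gen_poly_def poly_prod)

definition cp :: "nat \<Rightarrow> (nat \<Rightarrow> 'a) \<Rightarrow> 'a poly" where
  "cp n c = (\<Sum>i<n. Polynomial.monom (c i) i)"

lemma poly_cp: "poly (cp n c) x = (\<Sum>i<n. c i * x ^ i)"
  by (simp add: cp_def poly_sum poly_monom)

lemma coeff_cp: "coeff (cp n c) i = (if i < n then c i else 0)"
  by (simp add: cp_def coeff_sum coeff_monom)

lemma code_root:
  fixes Z :: "'a set"
  assumes "c \<in> cyc_code q n Z" "\<beta> \<in> Z"
  shows "(\<Sum>i<n. c i * \<beta> ^ i) = 0"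
proof -
  have "gen_poly Z dvd cp n c" using assms(1) by (simp add: cyc_code_def cp_def)
  then obtain h where "cp n c = gen_poly Z * h" by (rule dvdE)
  hence "poly (cp n c) \<beta> = 0" using gen_root[OF assms(2)] by simp
  thus ?thesis by (simp add: poly_cp)
qed

lemma code_F: "c \<in> cyc_code q n (Z::'a set) \<Longrightarrow> i < n \<Longrightarrow> c i \<in> Fsub q"
  by (simp add: cyc_code_def)

lemma code_zero: "c \<in> cyc_code q n (Z::'a set) \<Longrightarrow> i \<ge> n \<Longrightarrow> c i = 0"
  by (simp add: cyc_code_def)

lemma card_PiE_F: "card (PiE A (\<lambda>_. Fsub q :: 'a set)) = q ^ card A" if "finite A"
  using that by (simp add: card_PiE card_Fsub)

lemma card_code:
  fixes Z :: "'a set"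
  assumes frZ: "(\<lambda>x. x ^ q) ` Z = Z" and cZ: "card Z \<le> n"
  shows "card (cyc_code q n Z) = q ^ (n - card Z)"
proof -
  define k where "k = n - card Z"
  define g where "g = gen_poly Z"
  have g0: "g \<noteq> 0" by (simp add: g_def gen_nz)
  have dg: "degree g = card Z" by (simp add: g_def gen_deg)
  have frg: "fr g = g" using fr_gen[OF frZ] by (simp add: g_def)
  define H where "H = {h :: 'a poly. (\<forall>j. coeff h j \<in> Fsub q) \<and> (\<forall>j\<ge>k. coeff h j = 0)}"
  define \<Phi> where "\<Phi> = (\<lambda>h j. coeff (g * h) j)"
  have bij1: "bij_betw \<Phi> H (cyc_code q n Z)"
  proof (rule bij_betwI')
    fix h h' assume "h \<in> H" "h' \<in> H"
    show "(\<Phi> h = \<Phi> h') = (h = h')"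
    proof
      assume "\<Phi> h = \<Phi> h'"
      hence "g * h = g * h'" by (simp add: \<Phi>_def poly_eq_iff fun_eq_iff)
      thus "h = h'" using g0 by simp
    qed simp
  next
    fix h assume hH: "h \<in> H"
    have Fgh: "coeff (g * h) j \<in> Fsub q" for j
    proof -
      have "\<forall>i. coeff g i \<in> Fsub q" using frg fr_fix_iff by blast
      thus ?thesis using hH by (auto simp: coeff_mult H_def intro!: Fsub_sum Fsub_mult)
    qed
    have dlt: "coeff (g * h) j = 0" if "j \<ge> n" for j
    proof (cases "h = 0")
      case False
      have "degree h < k"
      proof (rule ccontr)
        assume "\<not> degree h < k"
        hence "coeff h (degree h) = 0" using hH by (auto simp: H_def)
        thus False using False by simp
      qed
      hence "degree (g * h) < n" using degree_mult_eq[OF g0 False] dg cZ k_def by simp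
      thus ?thesis using that by (intro coeff_eq_0) auto
    qed simp
    have "cp n (\<Phi> h) = g * h"
    proof (rule poly_eqI)
      fix j show "coeff (cp n (\<Phi> h)) j = coeff (g * h) j"
        using dlt by (simp add: coeff_cp \<Phi>_def)
    qed
    thus "\<Phi> h \<in> cyc_code q n Z"
      using Fgh dlt by (auto simp: cyc_code_def \<Phi>_def g_def cp_def[symmetric])
  next
    fix c assume cC: "c \<in> cyc_code q n Z"
    have "g dvd cp n c" using cC by (simp add: cyc_code_def g_def cp_def)
    then obtain h where ch: "cp n c = g * h" by (rule dvdE)
    have frc: "fr (cp n c) = cp n c"
      using cC by (auto simp: fr_fix_iff coeff_cp cyc_code_def Fsub_0)
    have "g * fr h = g * h" using frc ch frg by (metis fr_mult)
    hence frh: "fr h = h" using g0 by simp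
    have hk: "coeff h j = 0" if "j \<ge> k" for j
    proof (cases "h = 0")
      case False
      have "degree (cp n c) < n"
      proof (cases "cp n c = 0")
        case False
        have "coeff (cp n c) (degree (cp n c)) \<noteq> 0" using False by simp
        thus ?thesis by (simp add: coeff_cp split: if_splits)
      next
        case True
        then show ?thesis using ch g0 False by simp
      qed
      hence "degree h < k" using ch degree_mult_eq[OF g0 False] dg k_def by simp
      thus ?thesis using that by (intro coeff_eq_0) auto
    qed simp
    have "h \<in> H" using frh hk fr_fix_iff by (auto simp: H_def)
    moreover have "c = \<Phi> h"
    proof
      fix j show "c j = \<Phi> h j"
        using arg_cong[OF ch, of "\<lambda>p. coeff p j"] cC
        by (auto simp: \<Phi>_def coeff_cp cyc_code_def split: if_splits)
    qed
    ultimately show "\<exists>h\<in>H. c = \<Phi> h" by blast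
  qed
  have bij2: "bij_betw (\<lambda>h::'a poly. restrict (coeff h) {..<k}) H (PiE {..<k} (\<lambda>_. Fsub q))"
  proof (rule bij_betwI')
    fix h h' :: "'a poly" assume "h \<in> H" "h' \<in> H"
    thus "(restrict (coeff h) {..<k} = restrict (coeff h') {..<k}) = (h = h')"
      by (auto simp: H_def poly_eq_iff fun_eq_iff restrict_def) (metis not_le)
  next
    fix h :: "'a poly" assume "h \<in> H" thus "restrict (coeff h) {..<k} \<in> PiE {..<k} (\<lambda>_. Fsub q)"
      by (auto simp: H_def)
  next
    fix f :: "nat \<Rightarrow> 'a" assume f: "f \<in> PiE {..<k} (\<lambda>_. Fsub q)"
    define h :: "'a poly" where "h = (\<Sum>j<k. Polynomial.monom (f j) j)"
    have ch: "coeff h j = (if j < k then f j else 0)" for j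
      by (simp add: h_def coeff_sum coeff_monom)
    have "h \<in> H" using f by (auto simp: H_def ch Fsub_0)
    moreover have "f = restrict (coeff h) {..<k}"
      using f by (auto simp: fun_eq_iff ch PiE_def extensional_def)
    ultimately show "\<exists>h\<in>H. f = restrict (coeff h) {..<k}" by blast
  qed
  have "card (cyc_code q n Z) = card H" using bij1 by (simp add: bij_betw_same_card)
  also have "\<dots> = card (PiE {..<k} (\<lambda>_. Fsub q :: 'a set))" using bij2 by (simp add: bij_betw_same_card)
  also have "\<dots> = q ^ k" by (simp add: card_PiE_F)
  finally show ?thesis by (simp add: k_def)
qed

end


lemma bch_core:
  fixes x y :: "nat \<Rightarrow> 'a::field"
  assumes fin: "finite T" and ne: "T \<noteq> {}" and inj: "inj_on x T"
    and ynz: "\<forall>t\<in>T. y t \<noteq> 0" and van: "\<forall>j<D. (\<Sum>t\<in>T. y t * x t ^ j) = 0"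
  shows "D < card T"
proof (rule ccontr)
  assume "\<not> D < card T"
  hence cle: "card T \<le> D" by simp
  obtain t0 where t0: "t0 \<in> T" using ne by blast
  define P where "P = (\<Prod>s\<in>T-{t0}. [:- x s, 1:])"
  have dP: "degree P = card (T - {t0})"
    unfolding P_def by (subst degree_prod_eq_sum_degree) auto
  have dP2: "degree P < D" using dP cle t0 fin card_gt_0_iff[of T] by auto
  have "(\<Sum>t\<in>T. y t * poly P (x t)) = (\<Sum>t\<in>T. y t * (\<Sum>i\<le>degree P. coeff P i * x t ^ i))"
    by (simp add: poly_altdef)
  also have "\<dots> = (\<Sum>i\<le>degree P. coeff P i * (\<Sum>t\<in>T. y t * x t ^ i))"
    by (simp add: sum_distrib_left sum_distrib_right mult_ac sum.swap[of _ T])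
  also have "\<dots> = 0" using van dP2 by (intro sum.neutral) auto
  finally have s0: "(\<Sum>t\<in>T. y t * poly P (x t)) = 0" .
  have "(\<Sum>t\<in>T. y t * poly P (x t)) = y t0 * poly P (x t0) + (\<Sum>t\<in>T-{t0}. y t * poly P (x t))"
    using fin t0 by (simp add: sum.remove)
  also have "(\<Sum>t\<in>T-{t0}. y t * poly P (x t)) = 0"
    using fin by (intro sum.neutral) (auto simp: P_def poly_prod)
  finally have "y t0 * poly P (x t0) = 0" using s0 by simp
  moreover have "poly P (x t0) \<noteq> 0"
    using inj t0 fin by (auto simp: P_def poly_prod inj_on_def)
  ultimately show False using ynz t0 by simp
qed

locale cyc = fq q ty for q and ty :: "'a::{field,finite} itself" +
  fixes n :: nat and \<alpha> :: 'a
  assumes ndvd: "n dvd q + 1" and an: "\<alpha> ^ n = 1"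
    and prim: "\<forall>k. 0 < k \<and> k < n \<longrightarrow> \<alpha> ^ k \<noteq> 1"
begin

lemma n_pos: "n > 0" using ndvd by (auto intro!: Nat.gr0I)

lemma a_nz: "\<alpha> \<noteq> 0" using an n_pos by (auto simp: power_0_left)

lemma pow_inj: assumes "u < n" "v < n" "\<alpha> ^ u = \<alpha> ^ v" shows "u = v"
proof (rule ccontr)
  assume ne: "u \<noteq> v"
  have *: "\<alpha> ^ (b - a) = 1" if "a < b" "\<alpha> ^ a = \<alpha> ^ b" for a b
  proof -
    have "\<alpha> ^ b = \<alpha> ^ a * \<alpha> ^ (b - a)" using \<open>a < b\<close> by (simp add: power_add[symmetric])
    thus ?thesis using that a_nz by simp
  qed
  show False
  proof (cases "u < v")
    case True thus False using *[of u v] assms prim by auto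
  next
    case False thus False using *[of v u] assms prim ne by auto
  qed
qed

lemma pow_mod: "\<alpha> ^ u = \<alpha> ^ (u mod n)"
proof -
  have "u = n * (u div n) + u mod n" by simp
  hence "\<alpha> ^ u = (\<alpha> ^ n) ^ (u div n) * \<alpha> ^ (u mod n)" by (metis power_add power_mult)
  thus ?thesis by (simp add: an)
qed

lemma rpow_powi: "rpow \<alpha> n j = \<alpha> powi j"
proof -
  have "j = j mod int n + int n * (j div int n)" by simp
  hence "\<alpha> powi j = \<alpha> powi (j mod int n) * (\<alpha> powi int n) powi (j div int n)"
    using a_nz by (metis power_int_add power_int_mult)
  also have "\<dots> = \<alpha> powi (j mod int n)" using an by simp
  also have "\<dots> = \<alpha> ^ nat (j mod int n)"
    using n_pos by (metis power_int_of_nat pos_mod_sign of_nat_0_less_iff nat_0_le)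
  finally show ?thesis by (simp add: rpow_def)
qed

lemma rpow_add: "rpow \<alpha> n (a + b) = rpow \<alpha> n a * rpow \<alpha> n b"
  using a_nz by (simp add: rpow_powi power_int_add)

lemma rpow_pow: "(rpow \<alpha> n a) ^ u = rpow \<alpha> n (a * int u)"
  by (simp add: rpow_powi power_int_power')

lemma rpow_nat: "rpow \<alpha> n (int u) = \<alpha> ^ u"
  by (simp add: rpow_powi)

lemma rpow_mod: "rpow \<alpha> n (a mod int n) = rpow \<alpha> n a"
  by (simp add: rpow_def)

lemma rpow_one: "rpow \<alpha> n a = 1 \<longleftrightarrow> int n dvd a"
proof
  assume "rpow \<alpha> n a = 1"
  hence "\<alpha> ^ nat (a mod int n) = \<alpha> ^ 0" by (simp add: rpow_def)
  hence "nat (a mod int n) = 0" using n_pos by (intro pow_inj) (auto simp: nat_less_iff)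
  moreover have "a mod int n \<ge> 0" using n_pos by simp
  ultimately show "int n dvd a" using n_pos by (simp add: dvd_eq_mod_eq_0)
next
  assume "int n dvd a" thus "rpow \<alpha> n a = 1" by (simp add: rpow_def)
qed

lemma rpow_eq: "rpow \<alpha> n a = rpow \<alpha> n b \<longleftrightarrow> a mod int n = b mod int n"
proof
  assume "rpow \<alpha> n a = rpow \<alpha> n b"
  hence "nat (a mod int n) = nat (b mod int n)" unfolding rpow_def
    using n_pos by (intro pow_inj) (auto simp: nat_less_iff)
  moreover have "a mod int n \<ge> 0" "b mod int n \<ge> 0" using n_pos by simp_all
  ultimately show "a mod int n = b mod int n" by (metis nat_0_le)
qed (simp add: rpow_def)

lemma rpow_frob: "(rpow \<alpha> n a) ^ q = rpow \<alpha> n (- a)"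
proof -
  have "(rpow \<alpha> n a) ^ q = rpow \<alpha> n (a * int q)" by (rule rpow_pow)
  also have "\<dots> = rpow \<alpha> n (- a)"
  proof -
    obtain t where "q + 1 = n * t" using ndvd by (auto elim: dvdE)
    hence "int q + 1 = int n * int t" by (metis of_nat_1 of_nat_add of_nat_mult)
    hence h: "int q = int n * int t - 1" by linarith
    hence "a * int q = - a + int n * (a * int t)"
      by (metis (no_types, lifting) add_uminus_conv_diff mult.left_commute right_diff_distrib' mult.commute mult_1 add.commute)
    moreover have "(- a + int n * (a * int t)) mod int n = - a mod int n"
      by (rule mod_mult_self2)
    ultimately show ?thesis by (simp only: rpow_eq)
  qed
  finally show ?thesis .
qed

lemma code_rpow:
  assumes "c \<in> cyc_code q n (rpow \<alpha> n ` E)" "t \<in> E"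
  shows "(\<Sum>u<n. c u * rpow \<alpha> n (t * int u)) = 0"
  using code_root[OF assms(1), of "rpow \<alpha> n t"] assms(2) by (simp add: rpow_pow)

lemma diff_rpow:
  assumes "c \<in> cyc_code q n (rpow \<alpha> n ` E)" "c' \<in> cyc_code q n (rpow \<alpha> n ` E)" "t \<in> E"
  shows "(\<Sum>u<n. (c u - c' u) * rpow \<alpha> n (t * int u)) = 0"
  using code_rpow[OF assms(1,3)] code_rpow[OF assms(2,3)]
  by (simp add: left_diff_distrib sum_subtractf)

lemma bch_dist:
  assumes cons: "\<forall>j<D. sb + int j \<in> E"
    and c: "c \<in> cyc_code q n (rpow \<alpha> n ` E)" and c': "c' \<in> cyc_code q n (rpow \<alpha> n ` E)"
    and S: "S \<subseteq> {..<n}"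
    and ne: "\<exists>u\<in>S. c u \<noteq> c' u"
    and van: "\<And>s. s \<in> {sb..sb + int D - 1} \<Longrightarrow>
        (\<Sum>u\<in>S. (c u - c' u) * rpow \<alpha> n (s * int u)) = 0"
  shows "D < card {u\<in>S. c u \<noteq> c' u}"
proof -
  define T where "T = {u\<in>S. c u \<noteq> c' u}"
  have finS: "finite S" using S finite_subset by blast
  have fin: "finite T" using finS by (simp add: T_def)
  show ?thesis unfolding T_def[symmetric]
  proof (rule bch_core[where x = "\<lambda>u. \<alpha> ^ u" and y = "\<lambda>u. (c u - c' u) * rpow \<alpha> n (sb * int u)"])
    show "finite T" by fact
    show "T \<noteq> {}" using ne by (auto simp: T_def)
    show "inj_on (\<lambda>u. \<alpha> ^ u) T" using S by (auto simp: inj_on_def T_def intro: pow_inj)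
    show "\<forall>t\<in>T. (c t - c' t) * rpow \<alpha> n (sb * int t) \<noteq> 0"
      by (auto simp: T_def rpow_powi a_nz)
    show "\<forall>j<D. (\<Sum>t\<in>T. (c t - c' t) * rpow \<alpha> n (sb * int t) * (\<alpha> ^ t) ^ j) = 0"
    proof (intro allI impI)
      fix j assume j: "j < D"
      have "(\<Sum>t\<in>T. (c t - c' t) * rpow \<alpha> n (sb * int t) * (\<alpha> ^ t) ^ j)
          = (\<Sum>t\<in>S. (c t - c' t) * rpow \<alpha> n ((sb + int j) * int t))"
      proof (rule sum.mono_neutral_cong_left)
        show "finite S" by fact
        show "T \<subseteq> S" by (auto simp: T_def)
        show "\<forall>i\<in>S - T. (c i - c' i) * rpow \<alpha> n ((sb + int j) * int i) = 0"
          by (auto simp: T_def)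
        show "\<And>x. x \<in> T \<Longrightarrow> (c x - c' x) * rpow \<alpha> n (sb * int x) * (\<alpha> ^ x) ^ j =
              (c x - c' x) * rpow \<alpha> n ((sb + int j) * int x)"
        proof -
          fix x
          have "(\<alpha> ^ x) ^ j = rpow \<alpha> n (int x * int j)"
            by (metis of_nat_mult power_mult rpow_nat)
          hence "rpow \<alpha> n (sb * int x) * (\<alpha> ^ x) ^ j = rpow \<alpha> n (sb * int x + int x * int j)"
            by (simp add: rpow_add)
          also have "sb * int x + int x * int j = (sb + int j) * int x" by (simp add: algebra_simps)
          finally have "rpow \<alpha> n (sb * int x) * (\<alpha> ^ x) ^ j = rpow \<alpha> n ((sb + int j) * int x)" .
          thus "(c x - c' x) * rpow \<alpha> n (sb * int x) * (\<alpha> ^ x) ^ j =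
              (c x - c' x) * rpow \<alpha> n ((sb + int j) * int x)" by (simp add: mult.assoc)
        qed
      qed
      also have "\<dots> = 0" using van[of "sb + int j"] j by simp
      finally show "(\<Sum>t\<in>T. (c t - c' t) * rpow \<alpha> n (sb * int t) * (\<alpha> ^ t) ^ j) = 0" .
    qed
  qed
qed

end


lemma card_grid:
  fixes n \<nu> m :: nat
  assumes nm: "n = \<nu> * m" and \<nu>: "\<nu> > 0"
  shows "card {u. u < n \<and> P (u mod \<nu>) (u div \<nu>)} = card {(a, b). a < \<nu> \<and> b < m \<and> P a b}"
proof -
  have inj: "inj_on (\<lambda>u. (u mod \<nu>, u div \<nu>)) X" for X
  proof (rule inj_onI)
    fix x y assume "(x mod \<nu>, x div \<nu>) = (y mod \<nu>, y div \<nu>)"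
    hence e: "x mod \<nu> = y mod \<nu>" "x div \<nu> = y div \<nu>" by auto
    have "x = x div \<nu> * \<nu> + x mod \<nu>" by simp
    also have "\<dots> = y div \<nu> * \<nu> + y mod \<nu>" using e by simp
    also have "\<dots> = y" by simp
    finally show "x = y" .
  qed
  have "(\<lambda>u. (u mod \<nu>, u div \<nu>)) ` {u. u < n \<and> P (u mod \<nu>) (u div \<nu>)}
      = {(a, b). a < \<nu> \<and> b < m \<and> P a b}"
  proof (rule Set.set_eqI, rule iffI)
    fix x assume "x \<in> (\<lambda>u. (u mod \<nu>, u div \<nu>)) ` {u. u < n \<and> P (u mod \<nu>) (u div \<nu>)}"
    then obtain u where u: "u < n" "P (u mod \<nu>) (u div \<nu>)" "x = (u mod \<nu>, u div \<nu>)" by auto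
    have "u < m * \<nu>" using u nm by (simp add: mult.commute)
    hence "u div \<nu> < m" by (rule less_mult_imp_div_less)
    moreover have "u mod \<nu> < \<nu>" using \<nu> by simp
    ultimately show "x \<in> {(a, b). a < \<nu> \<and> b < m \<and> P a b}" using u by simp
  next
    fix x assume "x \<in> {(a, b). a < \<nu> \<and> b < m \<and> P a b}"
    then obtain a b where ab: "x = (a, b)" "a < \<nu>" "b < m" "P a b" by auto
    have "a + \<nu> * b < n"
    proof -
      have "a + \<nu> * b < \<nu> + \<nu> * b" using ab by simp
      also have "\<dots> = \<nu> * (b + 1)" by simp
      also have "\<dots> \<le> \<nu> * m" using ab by (intro mult_left_mono) auto
      finally show ?thesis using nm by simp
    qed
    moreover have md: "(a + \<nu> * b) mod \<nu> = a" "(a + \<nu> * b) div \<nu> = b" using ab by auto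
    ultimately have "a + \<nu> * b \<in> {u. u < n \<and> P (u mod \<nu>) (u div \<nu>)}" using ab by simp
    moreover have "x = (\<lambda>u. (u mod \<nu>, u div \<nu>)) (a + \<nu> * b)" using md ab by simp
    ultimately show "x \<in> (\<lambda>u. (u mod \<nu>, u div \<nu>)) ` {u. u < n \<and> P (u mod \<nu>) (u div \<nu>)}"
      by (rule rev_image_eqI)
  qed
  moreover have "card ((\<lambda>u. (u mod \<nu>, u div \<nu>)) ` {u. u < n \<and> P (u mod \<nu>) (u div \<nu>)})
     = card {u. u < n \<and> P (u mod \<nu>) (u div \<nu>)}" by (rule card_image[OF inj])
  ultimately show ?thesis by simp
qed

lemma card_class:
  fixes n \<nu> m :: nat
  assumes "n = \<nu> * m" "g < \<nu>"
  shows "card {u. u < n \<and> u mod \<nu> = g} = m"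
proof -
  have "card {u. u < n \<and> u mod \<nu> = g} = card {(a, b). a < \<nu> \<and> b < m \<and> a = g}"
    using card_grid[OF assms(1), of "\<lambda>a b. a = g"] assms by auto
  also have "{(a, b). a < \<nu> \<and> b < m \<and> a = g} = {g} \<times> {..<m}" using assms by auto
  finally show ?thesis by simp
qed

lemma card_U1:
  fixes n \<nu> m :: nat
  assumes "n = \<nu> * m" "G \<le> \<nu>" "r \<le> m" "\<nu> > 0"
  shows "card {u. u < n \<and> u mod \<nu> < G \<and> u div \<nu> < r} = G * r"
proof -
  have "card {u. u < n \<and> u mod \<nu> < G \<and> u div \<nu> < r} = card {(a, b). a < \<nu> \<and> b < m \<and> (a < G \<and> b < r)}"
    using card_grid[OF assms(1), of "\<lambda>a b. a < G \<and> b < r"] assms by auto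
  also have "{(a, b). a < \<nu> \<and> b < m \<and> (a < G \<and> b < r)} = {..<G} \<times> {..<r}" using assms by auto
  finally show ?thesis by simp
qed

lemma card_O:
  fixes n \<nu> m :: nat
  assumes "n = \<nu> * m" "\<nu> > 0"
  shows "card {u. u < n \<and> G \<le> u mod \<nu>} = (\<nu> - G) * m"
proof -
  have "card {u. u < n \<and> G \<le> u mod \<nu>} = card {(a, b). a < \<nu> \<and> b < m \<and> G \<le> a}"
    using card_grid[OF assms(1), of "\<lambda>a b. G \<le> a"] assms by auto
  also have "{(a, b). a < \<nu> \<and> b < m \<and> G \<le> a} = {G..<\<nu>} \<times> {..<m}" by auto
  finally show ?thesis by simp
qed

lemma card_rest:
  fixes n \<nu> m :: nat
  assumes "n = \<nu> * m" "g < \<nu>"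
  shows "card {u. u < n \<and> u mod \<nu> = g \<and> r \<le> u div \<nu>} = m - r"
proof -
  have "card {u. u < n \<and> u mod \<nu> = g \<and> r \<le> u div \<nu>} = card {(a, b). a < \<nu> \<and> b < m \<and> (a = g \<and> r \<le> b)}"
    using card_grid[OF assms(1), of "\<lambda>a b. a = g \<and> r \<le> b"] assms by auto
  also have "{(a, b). a < \<nu> \<and> b < m \<and> (a = g \<and> r \<le> b)} = {g} \<times> {r..<m}" using assms by auto
  finally show ?thesis by simp
qed

lemma min_dist_eqI:
  fixes n d :: nat
  assumes lb: "\<forall>c\<in>C. \<forall>c'\<in>C. c \<noteq> c' \<longrightarrow> d \<le> hdist {..<n} c c'"
    and ub: "\<exists>c\<in>C. \<exists>c'\<in>C. c \<noteq> c' \<and> hdist {..<n} c c' \<le> d"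
  shows "min_dist n C = d"
proof -
  define X where "X = {hdist {..<n} c c' | c c'. c \<in> C \<and> c' \<in> C \<and> c \<noteq> c'}"
  have hle: "hdist {..<n} c c' \<le> n" for c c'
    unfolding hdist_def by (rule order.trans[OF card_mono[of "{..<n}"]]) auto
  have fin: "finite X" by (rule finite_subset[of _ "{..n}"]) (auto simp: X_def hle)
  have ne: "X \<noteq> {}" using ub by (auto simp: X_def)
  obtain c c' where cc: "c \<in> C" "c' \<in> C" "c \<noteq> c'" "hdist {..<n} c c' \<le> d" using ub by blast
  have "Min X \<le> d" using cc fin by (intro Min_le_iff[THEN iffD2, OF fin ne]) (auto simp: X_def)
  moreover have "d \<le> Min X" using fin ne lb by (auto simp: X_def)
  ultimately show ?thesis by (simp add: min_dist_def X_def)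
qed

context fq begin

lemma ub:
  fixes C :: "(nat \<Rightarrow> 'a) set" and n \<nu> m r G e k :: nat
  assumes nm: "n = \<nu> * m" and \<nu>: "\<nu> > 0" and rm: "r \<le> m" and G: "G \<le> \<nu>"
    and k: "G * r + e + 1 = k" and e: "e \<le> (\<nu> - G) * m"
    and cC: "card C = q ^ k" and CF: "\<forall>c\<in>C. \<forall>u<n. c u \<in> Fsub q"
    and loc: "\<forall>c\<in>C. \<forall>c'\<in>C. \<forall>g<G. (\<exists>u<n. u mod \<nu> = g \<and> c u \<noteq> c' u) \<longrightarrow>
          m - r < card {u. u < n \<and> u mod \<nu> = g \<and> c u \<noteq> c' u}"
  shows "\<exists>c\<in>C. \<exists>c'\<in>C. c \<noteq> c' \<and> hdist {..<n} c c' \<le> n - (G * m + e)"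
proof -
  define Ob where "Ob = {u. u < n \<and> G \<le> u mod \<nu>}"
  have cOb: "card Ob = (\<nu> - G) * m" unfolding Ob_def using card_O[OF nm \<nu>] .
  obtain E0 where E0: "E0 \<subseteq> Ob" "card E0 = e" "finite E0"
    using obtain_subset_with_card_n[of e Ob] e cOb by auto
  define U1 where "U1 = {u. u < n \<and> u mod \<nu> < G \<and> u div \<nu> < r}"
  have cU1: "card U1 = G * r" unfolding U1_def using card_U1[OF nm G rm \<nu>] .
  define U0 where "U0 = U1 \<union> E0"
  have finU1: "finite U1" by (simp add: U1_def)
  have "U1 \<inter> E0 = {}" using E0 by (auto simp: U1_def Ob_def)
  hence cU0: "card U0 = G * r + e" using card_Un_disjoint[OF finU1 E0(3)] cU1 E0 by (simp add: U0_def)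
  have U0n: "U0 \<subseteq> {..<n}" using E0 by (auto simp: U0_def U1_def Ob_def)
  define \<pi> where "\<pi> = (\<lambda>c::nat \<Rightarrow> 'a. restrict c U0)"
  have im: "\<pi> ` C \<subseteq> PiE U0 (\<lambda>_. Fsub q)" using CF U0n by (auto simp: \<pi>_def)
  have finU0: "finite U0" using finU1 E0 by (simp add: U0_def)
  have "\<not> inj_on \<pi> C"
  proof
    assume inj: "inj_on \<pi> C"
    have "card C = card (\<pi> ` C)" using card_image[OF inj] by simp
    also have "\<dots> \<le> card (PiE U0 (\<lambda>_. Fsub q :: 'a set))"
      using im by (intro card_mono) (auto simp: finite_PiE finU0)
    also have "\<dots> = q ^ (G * r + e)" using card_PiE_F[OF finU0] cU0 by simp
    finally have "q ^ k \<le> q ^ (G * r + e)" using cC by simp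
    moreover have "q ^ (G * r + e) < q ^ k" using k q_ge2 by (intro power_strict_increasing) auto
    ultimately show False by simp
  qed
  then obtain c c' where cc: "c \<in> C" "c' \<in> C" "c \<noteq> c'" "\<pi> c = \<pi> c'"
    by (auto simp: inj_on_def)
  have agree: "c u = c' u" if "u \<in> U0" for u
    using fun_cong[OF cc(4), of u] that by (simp add: \<pi>_def)
  have sub: "{u \<in> {..<n}. c u \<noteq> c' u} \<subseteq> Ob - E0"
  proof
    fix u assume u: "u \<in> {u \<in> {..<n}. c u \<noteq> c' u}"
    have "G \<le> u mod \<nu>"
    proof (rule ccontr)
      assume "\<not> G \<le> u mod \<nu>"
      hence g: "u mod \<nu> < G" by simp
      have "m - r < card {u'. u' < n \<and> u' mod \<nu> = u mod \<nu> \<and> c u' \<noteq> c' u'}"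
        using loc cc g u by blast
      also have "\<dots> \<le> card {u'. u' < n \<and> u' mod \<nu> = u mod \<nu> \<and> r \<le> u' div \<nu>}"
      proof (rule card_mono)
        show "finite {u'. u' < n \<and> u' mod \<nu> = u mod \<nu> \<and> r \<le> u' div \<nu>}" by simp
        show "{u'. u' < n \<and> u' mod \<nu> = u mod \<nu> \<and> c u' \<noteq> c' u'}
            \<subseteq> {u'. u' < n \<and> u' mod \<nu> = u mod \<nu> \<and> r \<le> u' div \<nu>}"
          using agree g by (force simp: U0_def U1_def)
      qed
      also have "\<dots> = m - r" using card_rest[OF nm] \<nu> by simp
      finally show False by simp
    qed
    thus "u \<in> Ob - E0" using u agree by (auto simp: Ob_def U0_def)
  qed
  have "hdist {..<n} c c' \<le> card (Ob - E0)"
    unfolding hdist_def by (rule card_mono) (use sub in \<open>auto simp: Ob_def\<close>)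
  also have "\<dots> = (\<nu> - G) * m - e" using E0 cOb by (simp add: card_Diff_subset)
  also have "\<dots> = n - (G * m + e)" using nm by (simp add: diff_mult_distrib)
  finally show ?thesis using cc by blast
qed

end

context cyc begin

lemma class_van:
  assumes nm: "n = \<nu> * m" and m: "m > 0" and \<nu>nz: "of_nat \<nu> \<noteq> (0::'a)"
    and c: "c \<in> cyc_code q n (rpow \<alpha> n ` E)" and c': "c' \<in> cyc_code q n (rpow \<alpha> n ` E)"
    and cls: "\<forall>h<\<nu>. s + int h * int m \<in> E" and i0: "i0 < \<nu>"
  shows "(\<Sum>u\<in>{u. u < n \<and> u mod \<nu> = i0}. (c u - c' u) * rpow \<alpha> n (s * int u)) = 0"
proof -
  define w where "w u = c u - c' u" for u
  define G where "G u = (\<Sum>h<\<nu>. rpow \<alpha> n (int m * (int u - int i0) * int h))" for u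
  have G: "G u = (if u mod \<nu> = i0 then of_nat \<nu> else 0)" for u
  proof -
    define \<rho> where "\<rho> = rpow \<alpha> n (int m * (int u - int i0))"
    have Gr: "G u = (\<Sum>h<\<nu>. \<rho> ^ h)" by (simp add: G_def \<rho>_def rpow_pow)
    show ?thesis
    proof (cases "u mod \<nu> = i0")
      case True
      hence "int u mod int \<nu> = int i0 mod int \<nu>" using i0 by (metis mod_less of_nat_mod)
      hence "int \<nu> dvd int u - int i0" by (simp add: mod_eq_dvd_iff)
      then obtain t where "int u - int i0 = int \<nu> * t" by (auto elim: dvdE)
      hence "int m * (int u - int i0) = int n * t" using nm by simp
      hence "\<rho> = 1" by (simp add: \<rho>_def rpow_one)
      thus ?thesis using True Gr by simp
    next
      case False
      have r1: "\<rho> \<noteq> 1"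
      proof
        assume "\<rho> = 1"
        hence "int n dvd int m * (int u - int i0)" by (simp add: \<rho>_def rpow_one)
        hence "int m * int \<nu> dvd int m * (int u - int i0)" using nm by (simp add: mult.commute)
        hence "int \<nu> dvd int u - int i0" using m by (subst (asm) dvd_mult_cancel_left) auto
        hence "int u mod int \<nu> = int i0 mod int \<nu>" by (simp add: mod_eq_dvd_iff)
        hence "u mod \<nu> = i0" using i0 by (metis mod_less of_nat_eq_iff of_nat_mod)
        thus False using False by simp
      qed
      have "int n dvd int m * (int u - int i0) * int \<nu>"
        by (rule dvdI[of _ _ "int u - int i0"]) (simp add: nm algebra_simps)
      hence "\<rho> ^ \<nu> = 1"
        unfolding \<rho>_def rpow_pow rpow_one .
      hence "G u = 0" using Gr r1 by (simp add: sum_gp_strict)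
      thus ?thesis using False by simp
    qed
  qed
  have "0 = (\<Sum>h<\<nu>. rpow \<alpha> n (- (int i0 * int h * int m)) *
             (\<Sum>u<n. w u * rpow \<alpha> n ((s + int h * int m) * int u)))"
    using diff_rpow[OF c c'] cls by (simp add: w_def)
  also have "\<dots> = (\<Sum>u<n. w u * rpow \<alpha> n (s * int u) * G u)"
  proof -
    have eq: "rpow \<alpha> n (- (int i0 * int h * int m)) * (w u * rpow \<alpha> n ((s + int h * int m) * int u))
        = w u * rpow \<alpha> n (s * int u) * rpow \<alpha> n (int m * (int u - int i0) * int h)" for h u
    proof -
      have "rpow \<alpha> n (- (int i0 * int h * int m)) * rpow \<alpha> n ((s + int h * int m) * int u)
          = rpow \<alpha> n (s * int u) * rpow \<alpha> n (int m * (int u - int i0) * int h)"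
        unfolding rpow_add[symmetric] by (simp add: algebra_simps)
      thus ?thesis by (simp add: mult_ac)
    qed
    have "(\<Sum>h<\<nu>. rpow \<alpha> n (- (int i0 * int h * int m)) *
             (\<Sum>u<n. w u * rpow \<alpha> n ((s + int h * int m) * int u)))
        = (\<Sum>h<\<nu>. \<Sum>u<n. rpow \<alpha> n (- (int i0 * int h * int m)) *
             (w u * rpow \<alpha> n ((s + int h * int m) * int u)))"
      by (simp only: sum_distrib_left)
    also have "\<dots> = (\<Sum>h<\<nu>. \<Sum>u<n. w u * rpow \<alpha> n (s * int u) * rpow \<alpha> n (int m * (int u - int i0) * int h))"
      by (simp only: eq)
    also have "\<dots> = (\<Sum>u<n. \<Sum>h<\<nu>. w u * rpow \<alpha> n (s * int u) * rpow \<alpha> n (int m * (int u - int i0) * int h))"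
      by (rule sum.swap)
    also have "\<dots> = (\<Sum>u<n. w u * rpow \<alpha> n (s * int u) * G u)"
      unfolding G_def by (simp only: sum_distrib_left)
    finally show ?thesis .
  qed
  also have "\<dots> = (\<Sum>u\<in>{u. u < n \<and> u mod \<nu> = i0}. w u * rpow \<alpha> n (s * int u) * of_nat \<nu>)"
  proof -
    have "(\<Sum>u<n. w u * rpow \<alpha> n (s * int u) * G u)
        = (\<Sum>u\<in>{..<n}. if u mod \<nu> = i0 then w u * rpow \<alpha> n (s * int u) * of_nat \<nu> else 0)"
      by (intro sum.cong) (auto simp: G)
    also have "\<dots> = (\<Sum>u\<in>{..<n} \<inter> {u. u mod \<nu> = i0}. w u * rpow \<alpha> n (s * int u) * of_nat \<nu>)"
      by (subst sum.If_cases) auto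
    also have "{..<n} \<inter> {u. u mod \<nu> = i0} = {u. u < n \<and> u mod \<nu> = i0}" by auto
    finally show ?thesis .
  qed
  also have "\<dots> = of_nat \<nu> * (\<Sum>u\<in>{u. u < n \<and> u mod \<nu> = i0}. w u * rpow \<alpha> n (s * int u))"
    by (simp add: sum_distrib_left mult_ac)
  finally show ?thesis using \<nu>nz by (simp add: w_def)
qed

lemma loc_card:
  assumes nm: "n = \<nu> * m" and m: "m > 0" and \<nu>nz: "of_nat \<nu> \<noteq> (0::'a)"
    and c: "c \<in> cyc_code q n (rpow \<alpha> n ` E)" and c': "c' \<in> cyc_code q n (rpow \<alpha> n ` E)"
    and cls: "\<forall>j<D. \<forall>h<\<nu>. s1 + int j + int h * int m \<in> E" and i0: "i0 < \<nu>"
    and ne: "\<exists>u<n. u mod \<nu> = i0 \<and> c u \<noteq> c' u"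
  shows "D < card {u. u < n \<and> u mod \<nu> = i0 \<and> c u \<noteq> c' u}"
proof -
  have "D < card {u\<in>{u. u < n \<and> u mod \<nu> = i0}. c u \<noteq> c' u}"
  proof (rule bch_dist[OF _ c c'])
    show "\<forall>j<D. s1 + int j \<in> E" using cls \<nu>nz by (metis mult_zero_left of_nat_0 add_0_right of_nat_0_less_iff not_gr0 of_nat_eq_0_iff)
    show "{u. u < n \<and> u mod \<nu> = i0} \<subseteq> {..<n}" by auto
    show "\<exists>u\<in>{u. u < n \<and> u mod \<nu> = i0}. c u \<noteq> c' u" using ne by auto
    fix s assume s: "s \<in> {s1..s1 + int D - 1}"
    define j where "j = nat (s - s1)"
    have j: "j < D" "s = s1 + int j" using s by (auto simp: j_def)
    show "(\<Sum>u\<in>{u. u < n \<and> u mod \<nu> = i0}. (c u - c' u) * rpow \<alpha> n (s * int u)) = 0"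
      by (rule class_van[OF nm m \<nu>nz c c' _ i0]) (use cls j in auto)
  qed
  thus ?thesis by (simp add: conj_assoc)
qed

end


lemma sumset_int:
  fixes a1 a2 b1 b2 :: int
  assumes "a1 \<le> a2" "b1 \<le> b2"
  shows "{x + y | x y. x \<in> {a1..a2} \<and> y \<in> {b1..b2}} = {a1 + b1..a2 + b2}"
proof (rule Set.set_eqI, rule iffI)
  fix t assume "t \<in> {x + y | x y. x \<in> {a1..a2} \<and> y \<in> {b1..b2}}"
  thus "t \<in> {a1 + b1..a2 + b2}" by auto
next
  fix t assume t: "t \<in> {a1 + b1..a2 + b2}"
  define x where "x = max a1 (t - b2)"
  have "x \<in> {a1..a2}" "t - x \<in> {b1..b2}" using t assms by (auto simp: x_def)
  moreover have "t = x + (t - x)" by simp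
  ultimately show "t \<in> {x + y | x y. x \<in> {a1..a2} \<and> y \<in> {b1..b2}}" by blast
qed

lemma int_window_eq:
  fixes a b L :: int and n :: nat
  assumes "a \<in> {L..<L + int n}" "b \<in> {L..<L + int n}" "a mod int n = b mod int n"
  shows "a = b"
proof -
  have "int n dvd a - b" using assms(3) by (simp add: mod_eq_dvd_iff)
  then obtain t where t: "a - b = int n * t" by (auto elim: dvdE)
  have "\<bar>a - b\<bar> < int n" using assms(1,2) by auto
  hence lt: "int n * \<bar>t\<bar> < int n * 1" using t by (simp add: abs_mult)
  have "\<bar>t\<bar> < 1"
  proof (rule ccontr)
    assume "\<not> \<bar>t\<bar> < 1"
    hence "int n * 1 \<le> int n * \<bar>t\<bar>" by (intro mult_left_mono) auto
    thus False using lt by simp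
  qed
  hence "t = 0" by simp
  thus ?thesis using t by simp
qed


locale Eshape =
  fixes P i D m K \<sigma> n \<nu> :: int
  assumes D1: "D \<ge> 1" and i0: "i \<ge> 0" and K0: "K \<ge> 0" and m0: "m > 0"
    and hW: "2 * i + 2 * D < m"
    and nm: "n = \<nu> * m" and K\<nu>: "K + 1 < \<nu>"
    and hP: "2 * P = \<sigma> + n - (K + 1) * m - 1"
    and \<sigma>: "\<sigma> = 0 \<or> \<sigma> = n"
begin

definition "Em = {\<sigma> - (P + i + D) .. P + i + D}"
definition "Xe e = {P + e * m - D + 1 .. P + e * m + D}"
definition "Ee = (\<Union>e\<in>{1..K}. Xe e)"
definition "EA = {\<sigma> - (P + i) - 1 .. P + i} \<union> {P + e * m | e. 1 \<le> e \<and> e \<le> K}"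
definition "EB = {- (D - 1) .. D}"
definition "E = {x + y | x y. x \<in> EA \<and> y \<in> EB}"

lemma main_ne: "\<sigma> - (P + i) - 1 \<le> P + i"
proof -
  have "(K + 2) * m \<le> \<nu> * m" by (rule mult_right_mono) (use K\<nu> m0 in auto)
  hence "(K + 1) * m + m \<le> \<nu> * m" by (simp add: algebra_simps)
  hence "(K + 1) * m + m \<le> n" using nm by simp
  thus ?thesis using hP i0 m0 by linarith
qed

lemma E_eq: "E = Em \<union> Ee"
proof -
  have "E = {x + y | x y. x \<in> {\<sigma> - (P + i) - 1 .. P + i} \<and> y \<in> EB}
          \<union> {x + y | x y. x \<in> {P + e * m | e. 1 \<le> e \<and> e \<le> K} \<and> y \<in> EB}"
    unfolding E_def EA_def by blast
  also have "{x + y | x y. x \<in> {\<sigma> - (P + i) - 1 .. P + i} \<and> y \<in> EB} = Em"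
    unfolding EB_def Em_def using main_ne D1 by (subst sumset_int) (auto simp: algebra_simps)
  also have "{x + y | x y. x \<in> {P + e * m | e. 1 \<le> e \<and> e \<le> K} \<and> y \<in> EB} = Ee"
  proof -
    have "{x + y | x y. x \<in> {P + e * m | e. 1 \<le> e \<and> e \<le> K} \<and> y \<in> EB}
        = (\<Union>e\<in>{1..K}. {x + y | x y. x \<in> {P + e * m .. P + e * m} \<and> y \<in> EB})"
      by fastforce
    also have "\<dots> = Ee" unfolding Ee_def Xe_def EB_def using D1
      by (subst sumset_int) (auto simp: algebra_simps)
    finally show ?thesis .
  qed
  finally show ?thesis .
qed

lemma E_neg:
  assumes "t \<in> Em \<union> Ee"
  shows "\<exists>t'\<in>Em \<union> Ee. t' mod n = (- t) mod n"
proof (cases "t \<in> Em")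
  case True
  have "\<sigma> - t \<in> Em" using True by (auto simp: Em_def)
  moreover have "(\<sigma> - t) mod n = (- t) mod n" using \<sigma> by auto
  ultimately show ?thesis by blast
next
  case False
  then obtain e where e: "1 \<le> e" "e \<le> K" "t \<in> Xe e" using assms by (auto simp: Ee_def)
  define e' where "e' = K + 1 - e"
  have e': "1 \<le> e'" "e' \<le> K" using e by (auto simp: e'_def)
  have eq: "e' * m = (K + 1) * m - e * m" by (simp add: e'_def algebra_simps)
  have "\<sigma> + n - t \<in> Xe e'" using e(3) eq hP unfolding Xe_def by auto
  hence "\<sigma> + n - t \<in> Em \<union> Ee" using e' by (auto simp: Ee_def)
  moreover have "(\<sigma> + n - t) mod n = (- t) mod n"
  proof (cases "\<sigma> = 0")
    case True
    have "(- t + n * 1) mod n = (- t) mod n" by (rule mod_mult_self2)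
    thus ?thesis using True by simp
  next
    case False
    hence "\<sigma> = n" using \<sigma> by simp
    have "(- t + n * 2) mod n = (- t) mod n" by (rule mod_mult_self2)
    thus ?thesis using \<open>\<sigma> = n\<close> by (simp add: algebra_simps)
  qed
  ultimately show ?thesis by blast
qed

lemma Xe_le: assumes "e \<le> K" "t \<in> Xe e" shows "t \<le> P + K * m + D"
proof -
  have "e * m \<le> K * m" using assms m0 by (intro mult_right_mono) auto
  thus ?thesis using assms by (auto simp: Xe_def)
qed

lemma E_window:
  assumes "t \<in> Em \<union> Ee"
  shows "t \<in> {\<sigma> - (P + i + D) ..< \<sigma> - (P + i + D) + n}"
proof -
  have top: "P + K * m + D < \<sigma> - (P + i + D) + n"
  proof -
    define X where "X = K * m"
    have "(K + 1) * m = X + m" by (simp add: algebra_simps X_def)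
    hence "2 * P = \<sigma> + n - X - m - 1" using hP by simp
    thus ?thesis using hW i0 unfolding X_def[symmetric] by linarith
  qed
  show ?thesis
  proof (cases "t \<in> Em")
    case True
    have "2 * i + 2 * D < (K + 1) * m"
    proof -
      have "1 * m \<le> (K + 1) * m" by (rule mult_right_mono) (use K0 m0 in auto)
      thus ?thesis using hW by simp
    qed
    hence "P + i + D < \<sigma> - (P + i + D) + n" using hP by linarith
    thus ?thesis using True by (auto simp: Em_def)
  next
    case False
    then obtain e where e: "1 \<le> e" "e \<le> K" "t \<in> Xe e" using assms by (auto simp: Ee_def)
    have "m \<le> e * m" using e m0 by (simp add: mult_le_cancel_right1)
    moreover have "P + e * m - D + 1 \<le> t" using e(3) unfolding Xe_def by auto
    ultimately have "\<sigma> - (P + i + D) \<le> t" using main_ne hW i0 D1 by linarith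
    moreover have "t \<le> P + K * m + D" by (rule Xe_le[OF e(2,3)])
    ultimately show ?thesis using top by auto
  qed
qed

lemma card_E: "card (Em \<union> Ee) = nat (2 * (P + i + D) - \<sigma> + 1) + nat K * nat (2 * D)"
proof -
  have fx: "finite (Xe e)" for e by (simp add: Xe_def)
  have cx: "card (Xe e) = nat (2 * D)" for e by (simp add: Xe_def)
  have disj: "Xe e \<inter> Xe e' = {}" if "e \<in> {1..K}" "e' \<in> {1..K}" "e \<noteq> e'" for e e'
  proof -
    have gen: "Xe a \<inter> Xe b = {}" if "a < b" for a b
    proof -
      have "(a + 1) * m \<le> b * m" by (rule mult_right_mono) (use that m0 in auto)
      hence "a * m + m \<le> b * m" by (simp add: algebra_simps)
      hence lt: "P + a * m + D < P + b * m - D + 1" using hW i0 by linarith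
      show ?thesis
      proof (rule equals0I)
        fix x assume "x \<in> Xe a \<inter> Xe b"
        hence "x \<le> P + a * m + D" "P + b * m - D + 1 \<le> x" by (auto simp: Xe_def)
        thus False using lt by linarith
      qed
    qed
    show ?thesis
    proof (cases "e < e'")
      case True thus ?thesis using gen by blast
    next
      case False
      hence "e' < e" using that by simp
      hence "Xe e' \<inter> Xe e = {}" by (rule gen)
      thus ?thesis by (simp add: Int_commute)
    qed
  qed
  have "card (\<Union>e\<in>{1..K}. Xe e) = (\<Sum>e\<in>{1..K}. card (Xe e))"
  proof (rule card_UN_disjoint)
    show "finite {1..K}" by simp
    show "\<forall>i\<in>{1..K}. finite (Xe i)" using fx by blast
    show "\<forall>i\<in>{1..K}. \<forall>j\<in>{1..K}. i \<noteq> j \<longrightarrow> Xe i \<inter> Xe j = {}" using disj by blast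
  qed
  also have "\<dots> = nat K * nat (2 * D)" using K0 by (simp add: cx)
  finally have cEe: "card Ee = nat K * nat (2 * D)" by (simp add: Ee_def)
  have "Em \<inter> Ee = {}"
  proof -
    have "Em \<inter> Xe e = {}" if "1 \<le> e" for e
    proof -
      have "m \<le> e * m" using that m0 by (simp add: mult_le_cancel_right1)
      hence lt: "P + i + D < P + e * m - D + 1" using hW i0 by linarith
      show ?thesis
      proof (rule equals0I)
        fix x assume "x \<in> Em \<inter> Xe e"
        hence "x \<le> P + i + D" "P + e * m - D + 1 \<le> x" by (auto simp: Xe_def Em_def)
        thus False using lt by linarith
      qed
    qed
    show ?thesis
    proof (rule equals0I)
      fix x assume "x \<in> Em \<inter> Ee"
      then obtain e where "1 \<le> e" "x \<in> Em \<inter> Xe e" unfolding Ee_def by auto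
      thus False using \<open>\<And>e. 1 \<le> e \<Longrightarrow> Em \<inter> Xe e = {}\<close> by blast
    qed
  qed
  moreover have "finite Ee" by (simp add: Ee_def fx)
  ultimately have "card (Em \<union> Ee) = card Em + card Ee" by (simp add: card_Un_disjoint Em_def)
  thus ?thesis using cEe by (simp add: Em_def)
qed

lemma E_cls:
  assumes j: "0 \<le> j" "j < 2 * D" and h: "0 \<le> h" "h < \<nu>"
  shows "P - D + 1 - (\<nu> - K - 1) * m + j + h * m \<in> Em \<union> Ee"
proof (cases "h \<le> \<nu> - K - 1")
  case True
  have a: "h * m \<le> (\<nu> - K - 1) * m" using True m0 by (intro mult_right_mono) auto
  have b: "(\<nu> - K - 1) * m = n - (K + 1) * m" using nm by (simp add: algebra_simps)
  have c: "0 \<le> h * m" using h m0 by simp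
  define Y where "Y = (\<nu> - K - 1) * m"
  define Z where "Z = h * m"
  define KM where "KM = (K + 1) * m"
  have b': "Y = n - KM" using b by (simp add: Y_def KM_def)
  have hP': "2 * P = \<sigma> + n - KM - 1" using hP by (simp add: KM_def)
  have lo: "\<sigma> - (P + i + D) \<le> P - D + 1 - Y + j + Z"
    using b' hP' c j i0 unfolding Z_def[symmetric] by linarith
  have hi: "P - D + 1 - Y + j + Z \<le> P + i + D"
    using a j i0 unfolding Y_def[symmetric] Z_def[symmetric] by linarith
  have "P - D + 1 - (\<nu> - K - 1) * m + j + h * m \<in> Em"
    unfolding Em_def Y_def[symmetric] Z_def[symmetric] using lo hi by simp
  thus ?thesis by simp
next
  case False
  define e where "e = h - (\<nu> - K - 1)"
  have e: "1 \<le> e" "e \<le> K" using False h by (auto simp: e_def)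
  have "P - D + 1 - (\<nu> - K - 1) * m + j + h * m = P + e * m - D + 1 + j"
    by (simp add: e_def algebra_simps)
  hence "P - D + 1 - (\<nu> - K - 1) * m + j + h * m \<in> Xe e" using j by (simp add: Xe_def)
  thus ?thesis using e by (auto simp: Ee_def)
qed

end


context cyc begin

lemma nu_nz: assumes "\<nu> dvd n" shows "of_nat \<nu> \<noteq> (0::'a)"
proof
  assume "of_nat \<nu> = (0::'a)"
  hence "CHAR('a) dvd \<nu>" by (simp add: of_nat_eq_0_iff_char_dvd)
  hence d1: "CHAR('a) dvd q + 1" using assms ndvd dvd_trans by blast
  obtain e where e: "q = CHAR('a) ^ e" "e > 0" using char_q by blast
  have "CHAR('a) dvd q" using e by (simp add: dvd_power)
  hence "CHAR('a) dvd (q + 1) - q" using d1 by (intro dvd_diff_nat)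
  hence "CHAR('a) dvd 1" by simp
  thus False using prime_char by simp
qed

lemma gen:
  fixes r \<delta> \<nu> m D G i k d :: nat and P K \<sigma> :: int
  assumes sh: "Eshape P (int i) (int D) (int m) K \<sigma> (int n) (int \<nu>)"
    and nN: "n = \<nu> * m" and mdef: "m = r + \<delta> - 1" and \<delta>D: "\<delta> = 2 * D + 1" and r1: "r \<ge> 1"
    and hd: "int d = 2 * (P + int i + int D) - \<sigma> + 2"
    and hk: "n = k + (d - 1) + nat K * (2 * D)"
    and hG: "G \<le> \<nu>" "G * r < k" "k - 1 - G * r \<le> (\<nu> - G) * m" "d = n - (G * m + (k - 1 - G * r))"
    and opt: "int d = int n - int k - (\<lceil>real k / real r\<rceil> - 1) * (int \<delta> - 1) + 1"
  shows "optimal_LRC_with q n r \<delta>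
     (cyc_code q n (setmul (rpow \<alpha> n ` ({\<sigma> - (P + int i) - 1 .. P + int i} \<union> {P + e * int m | e. 1 \<le> e \<and> e \<le> K}))
                          (rpow \<alpha> n ` {- (int D - 1) .. int D}))) k d"
proof -
  interpret Eshape P "int i" "int D" "int m" K \<sigma> "int n" "int \<nu>" by (rule sh)
  define E where "E = Em \<union> Ee"
  have mN: "m > 0" using m0 by simp
  have \<nu>0: "\<nu> > 0" using nN n_pos by (auto intro!: Nat.gr0I)
  have \<nu>dvd: "\<nu> dvd n" using nN by simp
  have \<nu>nz: "of_nat \<nu> \<noteq> (0::'a)" by (rule nu_nz[OF \<nu>dvd])
  have sm: "setmul (rpow \<alpha> n ` ({\<sigma> - (P + int i) - 1 .. P + int i} \<union> {P + e * int m | e. 1 \<le> e \<and> e \<le> K}))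
                   (rpow \<alpha> n ` {- (int D - 1) .. int D}) = rpow \<alpha> n ` E"
  proof -
    have "setmul (rpow \<alpha> n ` EA) (rpow \<alpha> n ` EB) = rpow \<alpha> n ` Eshape.E P (int i) (int D) (int m) K \<sigma>"
    proof (rule Set.set_eqI, rule iffI)
      fix x assume "x \<in> setmul (rpow \<alpha> n ` EA) (rpow \<alpha> n ` EB)"
      then obtain a1 a2 where a: "a1 \<in> EA" "a2 \<in> EB" "x = rpow \<alpha> n a1 * rpow \<alpha> n a2"
        unfolding setmul_def by blast
      hence "x = rpow \<alpha> n (a1 + a2)" by (simp add: rpow_add)
      moreover have "a1 + a2 \<in> Eshape.E P (int i) (int D) (int m) K \<sigma>"
        unfolding Eshape.E_def[OF sh] using a by blast
      ultimately show "x \<in> rpow \<alpha> n ` Eshape.E P (int i) (int D) (int m) K \<sigma>" by blast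
    next
      fix x assume "x \<in> rpow \<alpha> n ` Eshape.E P (int i) (int D) (int m) K \<sigma>"
      then obtain a1 a2 where a: "a1 \<in> EA" "a2 \<in> EB" "x = rpow \<alpha> n (a1 + a2)"
        unfolding Eshape.E_def[OF sh] by blast
      hence "x = rpow \<alpha> n a1 * rpow \<alpha> n a2" by (simp add: rpow_add)
      thus "x \<in> setmul (rpow \<alpha> n ` EA) (rpow \<alpha> n ` EB)"
        unfolding setmul_def using a by blast
    qed
    thus ?thesis using E_eq by (simp add: EA_def EB_def E_def)
  qed
  define Z where "Z = rpow \<alpha> n ` E"
  define C where "C = cyc_code q n Z"
  have finE: "finite E" by (simp add: E_def Em_def Ee_def Xe_def)
  have injE: "inj_on (rpow \<alpha> n) E"
  proof (rule inj_onI)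
    fix a b assume ab: "a \<in> E" "b \<in> E" "rpow \<alpha> n a = rpow \<alpha> n b"
    show "a = b"
      by (rule int_window_eq[of a "\<sigma> - (P + int i + int D)" n b])
         (use ab E_window rpow_eq in \<open>auto simp: E_def\<close>)
  qed
  have cZ: "card Z = n - k"
  proof -
    have "card Z = card E" unfolding Z_def by (rule card_image[OF injE])
    also have "\<dots> = nat (2 * (P + int i + int D) - \<sigma> + 1) + nat K * nat (2 * int D)"
      unfolding E_def by (rule card_E)
    also have "nat (2 * (P + int i + int D) - \<sigma> + 1) = d - 1" using hd by simp
    also have "nat (2 * int D) = 2 * D" by simp
    finally show ?thesis using hk by simp
  qed
  have frZ: "(\<lambda>x. x ^ q) ` Z = Z"
  proof (rule card_subset_eq)
    show "finite Z" by simp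
    show "(\<lambda>x. x ^ q) ` Z \<subseteq> Z"
    proof
      fix y assume "y \<in> (\<lambda>x. x ^ q) ` Z"
      then obtain t where t: "t \<in> E" "y = (rpow \<alpha> n t) ^ q" by (auto simp: Z_def)
      obtain t' where t': "t' \<in> E" "t' mod int n = (- t) mod int n"
        using E_neg[of t] t(1) by (auto simp: E_def)
      have "y = rpow \<alpha> n t'" using t t' by (simp add: rpow_frob rpow_eq)
      thus "y \<in> Z" using t' by (simp add: Z_def)
    qed
    show "card ((\<lambda>x. x ^ q) ` Z) = card Z"
      using frob_inj by (simp add: card_image inj_on_def inj_def)
  qed
  have cC: "card C = q ^ k"
    unfolding C_def using card_code[OF frZ, of n] cZ hk by simp
  have CF: "\<forall>c\<in>C. \<forall>u<n. c u \<in> Fsub q" by (auto simp: C_def code_F)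
  have loc: "2 * D < card {u. u < n \<and> u mod \<nu> = i0 \<and> c u \<noteq> c' u}"
    if cc: "c \<in> C" "c' \<in> C" "i0 < \<nu>" "\<exists>u<n. u mod \<nu> = i0 \<and> c u \<noteq> c' u" for c c' i0
  proof (rule loc_card[OF nN mN \<nu>nz _ _ _ cc(3,4)])
    show "c \<in> cyc_code q n (rpow \<alpha> n ` E)" "c' \<in> cyc_code q n (rpow \<alpha> n ` E)"
      using cc by (simp_all add: C_def Z_def)
    show "\<forall>j<2 * D. \<forall>h<\<nu>. P - int D + 1 - (int \<nu> - K - 1) * int m + int j + int h * int m \<in> E"
      using E_cls by (auto simp: E_def)
  qed
  have lb: "\<forall>c\<in>C. \<forall>c'\<in>C. c \<noteq> c' \<longrightarrow> d \<le> hdist {..<n} c c'"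
  proof (intro ballI impI)
    fix c c' assume cc: "c \<in> C" "c' \<in> C" "c \<noteq> c'"
    have ne: "\<exists>u\<in>{..<n}. c u \<noteq> c' u"
    proof (rule ccontr)
      assume "\<not> (\<exists>u\<in>{..<n}. c u \<noteq> c' u)"
      hence "c u = c' u" for u using cc code_zero[of c n Z u] code_zero[of c' n Z u]
        by (cases "u < n") (auto simp: C_def)
      thus False using cc by auto
    qed
    have "d - 1 < card {u \<in> {..<n}. c u \<noteq> c' u}"
    proof (rule bch_dist[where sb = "\<sigma> - (P + int i + int D)" and E = E])
      show "\<forall>j<d - 1. \<sigma> - (P + int i + int D) + int j \<in> E"
        using hd by (auto simp: E_def Em_def)
      show "c \<in> cyc_code q n (rpow \<alpha> n ` E)" "c' \<in> cyc_code q n (rpow \<alpha> n ` E)"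
        using cc by (simp_all add: C_def Z_def)
      show "{..<n} \<subseteq> {..<n}" by simp
      show "\<exists>u\<in>{..<n}. c u \<noteq> c' u" by (rule ne)
      fix s assume s: "s \<in> {\<sigma> - (P + int i + int D)..\<sigma> - (P + int i + int D) + int (d - 1) - 1}"
      have "s \<in> E" using s hd by (auto simp: E_def Em_def)
      thus "(\<Sum>u\<in>{..<n}. (c u - c' u) * rpow \<alpha> n (s * int u)) = 0"
        using diff_rpow[of c E c' s] cc by (simp add: C_def Z_def lessThan_def)
    qed
    thus "d \<le> hdist {..<n} c c'" by (simp add: hdist_def)
  qed
  have ubd: "\<exists>c\<in>C. \<exists>c'\<in>C. c \<noteq> c' \<and> hdist {..<n} c c' \<le> d"
  proof -
    have "\<exists>c\<in>C. \<exists>c'\<in>C. c \<noteq> c' \<and> hdist {..<n} c c' \<le> n - (G * m + (k - 1 - G * r))"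
    proof (rule ub[OF nN \<nu>0 _ hG(1) _ hG(3) cC CF])
      show "r \<le> m" using mdef \<delta>D by simp
      show "G * r + (k - 1 - G * r) + 1 = k" using hG(2) by simp
      show "\<forall>c\<in>C. \<forall>c'\<in>C. \<forall>g<G. (\<exists>u<n. u mod \<nu> = g \<and> c u \<noteq> c' u) \<longrightarrow>
          m - r < card {u. u < n \<and> u mod \<nu> = g \<and> c u \<noteq> c' u}"
        using loc hG(1) mdef \<delta>D by auto
    qed
    thus ?thesis using hG(4) by simp
  qed
  have lrc: "is_LRC n r \<delta> C"
    unfolding is_LRC_def has_locality_def
  proof (intro allI impI)
    fix i' assume i': "i' < n"
    define S where "S = {u. u < n \<and> u mod \<nu> = i' mod \<nu>}"
    have cS: "card S = m" unfolding S_def by (rule card_class[OF nN]) (use \<nu>0 in simp)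
    show "\<exists>S. i' \<in> S \<and> S \<subseteq> {..<n} \<and> card S \<le> r + \<delta> - 1 \<and>
          (\<forall>c\<in>C. \<forall>c'\<in>C. (\<exists>j\<in>S. c j \<noteq> c' j) \<longrightarrow> \<delta> \<le> hdist S c c')"
    proof (intro exI conjI ballI impI)
      show "i' \<in> S" "S \<subseteq> {..<n}" using i' by (auto simp: S_def)
      show "card S \<le> r + \<delta> - 1" using cS mdef by simp
      fix c c' assume cc: "c \<in> C" "c' \<in> C" and ex: "\<exists>j\<in>S. c j \<noteq> c' j"
      have "2 * D < card {u. u < n \<and> u mod \<nu> = i' mod \<nu> \<and> c u \<noteq> c' u}"
        using loc[OF cc, of "i' mod \<nu>"] ex \<nu>0 by (auto simp: S_def)
      moreover have "{u. u < n \<and> u mod \<nu> = i' mod \<nu> \<and> c u \<noteq> c' u} = {u \<in> S. c u \<noteq> c' u}"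
        by (auto simp: S_def)
      ultimately show "\<delta> \<le> hdist S c c'" using \<delta>D by (simp add: hdist_def)
    qed
  qed
  have md: "min_dist n C = d" by (rule min_dist_eqI[OF lb ubd])
  show ?thesis
    unfolding sm optimal_LRC_with_def using lrc cC md opt by (simp add: C_def Z_def)
qed

end


context cyc begin

lemma inst:
  fixes r \<delta> i D m \<nu> :: nat and P K \<sigma> :: int
  assumes mdef: "m = r + \<delta> - 1" and mdvd: "m dvd n" and \<nu>def: "\<nu> = n div m"
    and \<delta>D: "\<delta> = 2 * D + 1" and \<delta>3: "\<delta> \<ge> 3" and r1: "r \<ge> 1" and ir: "2 * i \<le> r - 1"
    and \<sigma>: "\<sigma> = 0 \<or> \<sigma> = int n" and K0: "K \<ge> 0" and K\<nu>: "K + 1 < int \<nu>"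
    and hP: "2 * P = \<sigma> + int n - (K + 1) * int m - 1"
  shows "optimal_LRC_with q n r \<delta>
     (cyc_code q n (setmul (rpow \<alpha> n ` ({\<sigma> - (P + int i) - 1 .. P + int i} \<union> {P + e * int m | e. 1 \<le> e \<and> e \<le> K}))
                          (rpow \<alpha> n ` {- (int D - 1) .. int D})))
     (nat ((K + 1) * int r - 2 * int i)) (nat (2 * (P + int i + int D) - \<sigma> + 2))"
proof -
  define kI where "kI = (K + 1) * int r - 2 * int i"
  define dI where "dI = 2 * (P + int i + int D) - \<sigma> + 2"
  define k where "k = nat kI"
  define d where "d = nat dI"
  define G where "G = nat K"
  have nN: "n = \<nu> * m" using mdvd \<nu>def by simp
  have nI: "int n = int \<nu> * int m" using nN by simp
  have m0: "m > 0" using mdef r1 \<delta>3 by simp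
  have D1: "D \<ge> 1" using \<delta>D \<delta>3 by simp
  have mI: "int m = int r + 2 * int D" using mdef \<delta>D by simp
  have iI: "2 * int i \<le> int r - 1" using ir r1 by linarith
  have KmI: "(K + 1) * int m + int m \<le> int n"
  proof -
    have "(K + 2) * int m \<le> int \<nu> * int m" by (rule mult_right_mono) (use K\<nu> in auto)
    thus ?thesis using nI by (simp add: algebra_simps)
  qed
  have dIv: "dI = int n - (K + 1) * int m + 2 * int i + 2 * int D + 1"
  proof -
    define KM where "KM = (K + 1) * int m"
    have "2 * P = \<sigma> + int n - KM - 1" using hP by (simp add: KM_def)
    hence "dI = int n - KM + 2 * int i + 2 * int D + 1" unfolding dI_def by arith
    thus ?thesis by (simp add: KM_def)
  qed
  have dpos: "dI \<ge> 1" using dIv KmI m0 by linarith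
  have Kr: "K * int r \<ge> 0" using K0 by simp
  have kpos: "kI \<ge> 1" unfolding kI_def using Kr iI by (simp add: algebra_simps)
  have kI: "int k = kI" using kpos by (simp add: k_def)
  have dI': "int d = dI" using dpos by (simp add: d_def)
  have GI: "int G = K" using K0 by (simp add: G_def)
  have sh: "Eshape P (int i) (int D) (int m) K \<sigma> (int n) (int \<nu>)"
  proof
    show "1 \<le> int D" using D1 by simp
    show "0 \<le> int i" by simp
    show "0 \<le> K" by fact
    show "0 < int m" using m0 by simp
    show "2 * int i + 2 * int D < int m" using mI iI by linarith
    show "int n = int \<nu> * int m" by fact
    show "K + 1 < int \<nu>" by fact
    show "2 * P = \<sigma> + int n - (K + 1) * int m - 1" by fact
    show "\<sigma> = 0 \<or> \<sigma> = int n" by fact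
  qed
  have key: "int n = kI + (dI - 1) + K * (2 * int D)"
    unfolding kI_def dIv mI by (simp add: algebra_simps)
  have hk: "n = k + (d - 1) + nat K * (2 * D)"
  proof -
    have "int n = int k + int (d - 1) + int (nat K * (2 * D))"
      using key kI dI' dpos GI[unfolded G_def] by (simp add: of_nat_diff)
    thus ?thesis by linarith
  qed
  have hG1: "G \<le> \<nu>" using GI K\<nu> by linarith
  have GrI: "int G * int r < kI" using GI iI unfolding kI_def by (simp add: algebra_simps)
  have hG2: "G * r < k" using GrI kI by (metis of_nat_less_iff of_nat_mult)
  have eI: "int (k - 1 - G * r) = int r - 2 * int i - 1"
    using hG2 kI GI unfolding kI_def by (simp add: of_nat_diff algebra_simps)
  have hG3: "k - 1 - G * r \<le> (\<nu> - G) * m"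
  proof -
    have "int (\<nu> - G) = int \<nu> - K" using hG1 GI by (simp add: of_nat_diff)
    hence e1: "int ((\<nu> - G) * m) = (int \<nu> - K) * int m" by simp
    have e2: "1 * int m \<le> (int \<nu> - K) * int m" by (rule mult_right_mono) (use K\<nu> in auto)
    have "int m \<le> int ((\<nu> - G) * m)" unfolding e1 using e2 by simp
    moreover have "int (k - 1 - G * r) \<le> int m" using eI mI by linarith
    ultimately have "int (k - 1 - G * r) \<le> int ((\<nu> - G) * m)" by linarith
    thus ?thesis by (simp only: of_nat_le_iff)
  qed
  have hG4: "d = n - (G * m + (k - 1 - G * r))"
  proof -
    define X where "X = G * m + (k - 1 - G * r)"
    have a: "int (G * m) = K * int m" using GI by simp
    have xI: "int X = K * int m + (int r - 2 * int i - 1)"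
      unfolding X_def of_nat_add a eI ..
    have "K * int m + (int r - 2 * int i - 1) \<le> int n"
      using KmI mI iI by (simp add: algebra_simps)
    hence xn: "X \<le> n" using xI by linarith
    have "int (n - X) = int n - int X" using xn by (simp add: of_nat_diff)
    also have "\<dots> = dI" unfolding xI dIv mI by (simp add: algebra_simps)
    finally show ?thesis using dI' unfolding X_def by linarith
  qed
  have ceil: "\<lceil>real k / real r\<rceil> = K + 1"
  proof (rule ceiling_unique)
    have rp: "real r > 0" using r1 by simp
    have kr: "real k = real_of_int ((K + 1) * int r - 2 * int i)" using kI kI_def by (metis of_int_of_nat_eq)
    have "real_of_int (K + 1) * real r - real r < real k"
      using kr iI by (simp add: algebra_simps)
    hence "real_of_int (K + 1) - 1 < real k / real r" using rp by (simp add: field_simps)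
    thus "real_of_int (K + 1) - 1 < real k / real r" .
    have "real k \<le> real_of_int (K + 1) * real r" using kr by (simp add: algebra_simps)
    thus "real k / real r \<le> real_of_int (K + 1)" using rp by (simp add: field_simps)
  qed
  have opt: "int d = int n - int k - (\<lceil>real k / real r\<rceil> - 1) * (int \<delta> - 1) + 1"
    unfolding ceil using dI' kI key \<delta>D unfolding kI_def by (simp add: algebra_simps)
  have "optimal_LRC_with q n r \<delta>
     (cyc_code q n (setmul (rpow \<alpha> n ` ({\<sigma> - (P + int i) - 1 .. P + int i} \<union> {P + e * int m | e. 1 \<le> e \<and> e \<le> K}))
                          (rpow \<alpha> n ` {- (int D - 1) .. int D}))) k d"
    by (rule gen[OF sh nN mdef \<delta>D r1 _ hk hG1 hG2 hG3 hG4 opt]) (use dI' dI_def in simp)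
  thus ?thesis by (simp add: k_def d_def kI_def dI_def)
qed

end


lemma img1: "{rpow \<alpha> n j | j. a \<le> j \<and> j \<le> b} = rpow \<alpha> n ` {a..b}"
  by auto

lemma img2: "{rpow \<alpha> n (c + (l + e) * mm) | e. 1 \<le> e \<and> e \<le> X} =
    rpow \<alpha> n ` {(c + l * mm) + e * mm | e. 1 \<le> e \<and> e \<le> X}"
proof (rule Set.set_eqI, rule iffI)
  fix x assume "x \<in> {rpow \<alpha> n (c + (l + e) * mm) | e. 1 \<le> e \<and> e \<le> X}"
  then obtain e where e: "x = rpow \<alpha> n (c + (l + e) * mm)" "1 \<le> e" "e \<le> X" by blast
  have eq: "c + (l + e) * mm = (c + l * mm) + e * mm" by (simp add: algebra_simps)
  have "x = rpow \<alpha> n ((c + l * mm) + e * mm)" using e(1) unfolding eq .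
  thus "x \<in> rpow \<alpha> n ` {(c + l * mm) + e * mm | e. 1 \<le> e \<and> e \<le> X}" using e by blast
next
  fix x assume "x \<in> rpow \<alpha> n ` {(c + l * mm) + e * mm | e. 1 \<le> e \<and> e \<le> X}"
  then obtain e where e: "x = rpow \<alpha> n ((c + l * mm) + e * mm)" "1 \<le> e" "e \<le> X" by blast
  have eq: "c + (l + e) * mm = (c + l * mm) + e * mm" by (simp add: algebra_simps)
  have "x = rpow \<alpha> n (c + (l + e) * mm)" using e(1) unfolding eq .
  thus "x \<in> {rpow \<alpha> n (c + (l + e) * mm) | e. 1 \<le> e \<and> e \<le> X}" using e by blast
qed

theorem corollary5p5:
  fixes q n r \<delta> i :: nat and \<alpha> :: "'a::{field,finite}"
  assumes "\<exists>p m. prime p \<and> m > 0 \<and> q = p ^ m"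
    and "card (UNIV :: 'a set) = q ^ 2"
    and "n dvd q + 1"
    and "\<alpha> ^ n = 1" and "\<forall>k. 0 < k \<and> k < n \<longrightarrow> \<alpha> ^ k \<noteq> 1"
    and "r \<ge> 1" and "\<delta> \<ge> 3" and "odd \<delta>"
    and "(r + \<delta> - 1) dvd n"
    and "2 * i \<le> r - 1"
  shows
   "(let \<nu> = int (n div (r + \<delta> - 1)); m = int (r + \<delta> - 1); ii = int i; rr = int r; dd = int \<delta>;
         B = {rpow \<alpha> n j | j. - ((dd - 3) div 2) \<le> j \<and> j \<le> (dd - 1) div 2}
     in (odd (r + \<delta> - 1) \<longrightarrow>
          (\<forall>l::int. 0 \<le> l \<and> l \<le> (\<nu> - 3) div 2 \<longrightarrow>
             (let A = {rpow \<alpha> n j | j. - ((rr + dd) div 2) - l * m - ii \<le> j \<and>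
                                        j \<le> (rr + dd - 2) div 2 + l * m + ii}
                    \<union> {rpow \<alpha> n ((rr + dd - 2) div 2 + (l + e) * m) | e. 1 \<le> e \<and> e \<le> \<nu> - 2 * l - 2}
              in optimal_LRC_with q n r \<delta> (cyc_code q n (setmul A B))
                   (nat ((\<nu> - 2 * l - 1) * rr - 2 * ii))
                   (nat (dd + 2 * ii + (2 * l + 1) * m)))))
      \<and> (odd (r + \<delta> - 1) \<and> odd \<nu> \<longrightarrow>
          (\<forall>l::int. 1 \<le> l \<and> l \<le> (\<nu> - 3) div 2 \<longrightarrow>
             (let A = {rpow \<alpha> n j | j. (int n - 1) div 2 - l * m - ii \<le> j \<and>
                                        j \<le> (int n - 1) div 2 + l * m + ii}
                    \<union> {rpow \<alpha> n ((int n - 1) div 2 + (l + e) * m) | e. 1 \<le> e \<and> e \<le> \<nu> - 2 * l - 1}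
              in optimal_LRC_with q n r \<delta> (cyc_code q n (setmul A B))
                   (nat ((\<nu> - 2 * l) * rr - 2 * ii))
                   (nat (dd + 2 * ii + 2 * l * m))))))"
proof -
  interpret cyc q "TYPE('a)" n \<alpha>
    by unfold_locales (use assms in auto)
  define m where "m = r + \<delta> - 1"
  define \<nu> where "\<nu> = n div m"
  define D where "D = (\<delta> - 1) div 2"
  have \<delta>D: "\<delta> = 2 * D + 1" using assms(8) by (simp add: D_def)
  have mdvd: "m dvd n" using assms(9) by (simp add: m_def)
  have "n = \<nu> * m" using mdvd by (simp add: \<nu>_def)
  hence nI: "int n = int \<nu> * int m" by (metis of_nat_mult)
  have mI: "int m = int r + int \<delta> - 1" using assms(6) by (simp add: m_def)
  have r1: "r \<ge> 1" "\<delta> \<ge> 3" "2 * i \<le> r - 1" using assms by auto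
  have Bset: "{rpow \<alpha> n j | j. - ((int \<delta> - 3) div 2) \<le> j \<and> j \<le> (int \<delta> - 1) div 2}
      = rpow \<alpha> n ` {- (int D - 1) .. int D}"
  proof -
    have "(int \<delta> - 3) div 2 = int D - 1" "(int \<delta> - 1) div 2 = int D" using \<delta>D by simp_all
    thus ?thesis by (simp add: img1)
  qed
  show ?thesis
    unfolding Let_def m_def[symmetric] \<nu>_def[symmetric] Bset
  proof (intro conjI impI allI)
    fix l :: int
    assume om': "odd m" and l: "0 \<le> l \<and> l \<le> (int \<nu> - 3) div 2"
    have om: "odd (r + \<delta> - 1)" using om' by (simp add: m_def)
    obtain H where H: "int r + int \<delta> = 2 * H" using om r1
      by (metis (no_types, lifting) One_nat_def Suc_pred add_gr_0 even_Suc even_of_nat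
          evenE of_nat_add zero_less_numeral less_le_trans)
    define P where "P = (int r + int \<delta> - 2) div 2 + l * int m"
    define K where "K = int \<nu> - 2 * l - 2"
    have Pv: "P = H - 1 + l * int m" using H by (simp add: P_def)
    have l2: "2 * l \<le> int \<nu> - 3" using l by linarith
    have Aset: "{rpow \<alpha> n j | j. - ((int r + int \<delta>) div 2) - l * int m - int i \<le> j \<and>
                  j \<le> (int r + int \<delta> - 2) div 2 + l * int m + int i}
              \<union> {rpow \<alpha> n ((int r + int \<delta> - 2) div 2 + (l + e) * int m) | e. 1 \<le> e \<and> e \<le> int \<nu> - 2 * l - 2}
            = rpow \<alpha> n ` ({0 - (P + int i) - 1 .. P + int i} \<union> {P + e * int m | e. 1 \<le> e \<and> e \<le> K})"
    proof -
      have lo: "- ((int r + int \<delta>) div 2) - l * int m - int i = 0 - (P + int i) - 1"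
        using H Pv by simp
      have hi: "(int r + int \<delta> - 2) div 2 + l * int m + int i = P + int i" by (simp add: P_def)
      have pe: "(int r + int \<delta> - 2) div 2 + l * int m = P" by (simp add: P_def)
      show ?thesis by (simp only: img1 img2 image_Un lo hi pe K_def)
    qed
    have hP: "2 * P = 0 + int n - (K + 1) * int m - 1"
      unfolding Pv K_def nI using H mI by (simp add: algebra_simps)
    have main: "optimal_LRC_with q n r \<delta>
       (cyc_code q n (setmul (rpow \<alpha> n ` ({0 - (P + int i) - 1 .. P + int i} \<union> {P + e * int m | e. 1 \<le> e \<and> e \<le> K}))
                            (rpow \<alpha> n ` {- (int D - 1) .. int D})))
       (nat ((K + 1) * int r - 2 * int i)) (nat (2 * (P + int i + int D) - 0 + 2))"
      by (rule inst[OF m_def mdvd \<nu>_def \<delta>D r1(2) r1(1) r1(3) _ _ _ hP]) (use l2 l in \<open>auto simp: K_def\<close>)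
    have e1: "(K + 1) * int r - 2 * int i = (int \<nu> - 2 * l - 1) * int r - 2 * int i"
      by (simp add: K_def)
    have e2: "2 * (P + int i + int D) - 0 + 2 = int \<delta> + 2 * int i + (2 * l + 1) * int m"
      unfolding Pv using H mI \<delta>D by (simp add: algebra_simps)
    show "optimal_LRC_with q n r \<delta>
       (cyc_code q n (setmul ({rpow \<alpha> n j | j. - ((int r + int \<delta>) div 2) - l * int m - int i \<le> j \<and>
                  j \<le> (int r + int \<delta> - 2) div 2 + l * int m + int i}
              \<union> {rpow \<alpha> n ((int r + int \<delta> - 2) div 2 + (l + e) * int m) | e. 1 \<le> e \<and> e \<le> int \<nu> - 2 * l - 2})
         (rpow \<alpha> n ` {- (int D - 1) .. int D})))
       (nat ((int \<nu> - 2 * l - 1) * int r - 2 * int i))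
       (nat (int \<delta> + 2 * int i + (2 * l + 1) * int m))"
      using main unfolding Aset e1 e2 .
  next
    fix l :: int
    assume om: "odd m \<and> odd (int \<nu>)" and l: "1 \<le> l \<and> l \<le> (int \<nu> - 3) div 2"
    have on: "odd n" using om nI
      by (metis even_mult_iff even_of_nat of_nat_mult)
    define c where "c = (int n - 1) div 2"
    have c2: "2 * c = int n - 1" using on by (simp add: c_def)
    define P where "P = c + l * int m"
    define K where "K = int \<nu> - 2 * l - 1"
    have l2: "2 * l \<le> int \<nu> - 3" using l by linarith
    have Aset: "{rpow \<alpha> n j | j. (int n - 1) div 2 - l * int m - int i \<le> j \<and>
                  j \<le> (int n - 1) div 2 + l * int m + int i}
              \<union> {rpow \<alpha> n ((int n - 1) div 2 + (l + e) * int m) | e. 1 \<le> e \<and> e \<le> int \<nu> - 2 * l - 1}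
            = rpow \<alpha> n ` ({int n - (P + int i) - 1 .. P + int i} \<union> {P + e * int m | e. 1 \<le> e \<and> e \<le> K})"
    proof -
      have lo: "(int n - 1) div 2 - l * int m - int i = int n - (P + int i) - 1"
        using c2 by (simp add: P_def c_def[symmetric])
      have hi: "(int n - 1) div 2 + l * int m + int i = P + int i" by (simp add: P_def c_def)
      have pe: "(int n - 1) div 2 + l * int m = P" by (simp add: P_def c_def)
      show ?thesis by (simp only: img1 img2 image_Un lo hi pe K_def)
    qed
    have hP: "2 * P = int n + int n - (K + 1) * int m - 1"
      unfolding P_def K_def using c2 nI by (simp add: algebra_simps)
    have main: "optimal_LRC_with q n r \<delta>
       (cyc_code q n (setmul (rpow \<alpha> n ` ({int n - (P + int i) - 1 .. P + int i} \<union> {P + e * int m | e. 1 \<le> e \<and> e \<le> K}))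
                            (rpow \<alpha> n ` {- (int D - 1) .. int D})))
       (nat ((K + 1) * int r - 2 * int i)) (nat (2 * (P + int i + int D) - int n + 2))"
      by (rule inst[OF m_def mdvd \<nu>_def \<delta>D r1(2) r1(1) r1(3) _ _ _ hP]) (use l2 l in \<open>auto simp: K_def\<close>)
    have e1: "(K + 1) * int r - 2 * int i = (int \<nu> - 2 * l) * int r - 2 * int i"
      by (simp add: K_def)
    have e2: "2 * (P + int i + int D) - int n + 2 = int \<delta> + 2 * int i + 2 * l * int m"
      unfolding P_def using c2 \<delta>D by (simp add: algebra_simps)
    show "optimal_LRC_with q n r \<delta>
       (cyc_code q n (setmul ({rpow \<alpha> n j | j. (int n - 1) div 2 - l * int m - int i \<le> j \<and>
                  j \<le> (int n - 1) div 2 + l * int m + int i}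
              \<union> {rpow \<alpha> n ((int n - 1) div 2 + (l + e) * int m) | e. 1 \<le> e \<and> e \<le> int \<nu> - 2 * l - 1})
         (rpow \<alpha> n ` {- (int D - 1) .. int D})))
       (nat ((int \<nu> - 2 * l) * int r - 2 * int i))
       (nat (int \<delta> + 2 * int i + 2 * l * int m))"
      using main unfolding Aset e1 e2 .
  qed
qed


end
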